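(* Let $0<m<M$, let $f:[m,M]\to(0,\infty)$ be convex and either increasing or decreasing on $[m,M]$, let $A\in\mathcal{B}(\mathcal{H})$ satisfy $mI\le A\le MI$, and let $\varphi:\mathcal{B}(\mathcal{H})\to\mathcal{B}(\mathcal{K})$ be a positive linear map with $\varphi(I)=I$. Then for any $t_0\in(m,M)$ at which $f'(t_0)$ exists and $f'(t_0)\ne0$, $$\varphi(f(A))+\varphi(A_{\min})\le \alpha(f,t_0)f(\varphi(A))+\beta(f,t_0)$$ and $$f(\varphi(A))+(\varphi(A))_{\min}\le \alpha(f,t_0)\varphi(f(A))+\beta(f,t_0).$$
   Context: $\mathcal{H},\mathcal{K}$ are complex Hilbert spaces, $X\le Y$ means $Y-X$ is positive semidefinite, and operator functions are defined by continuous functional calculus. $a_f=\frac{f(M)-f(m)}{M-m}$, $b_f=\frac{Mf(m)-mf(M)}{M-m}$, $\alpha(f,t_0)=\frac{a_f}{f'(t_0)}$, $\beta(f,t_0)=a_ft_0+b_f-\frac{a_f\,f(t_0)}{f'(t_0)}$. For a self-adjoint operator $X$ with spectrum in $[m,M]$, $X_{\min}:=\frac{1}{M-m}\left(\frac{f(m)+f(M)}{2}-f\left(\frac{m+M}{2}\right)\right)\left(M-m-|M+m-2X|\right)$, i.e. $X_{\min}$ is the functional calculus of $t\mapsto\frac{2\min\{t-m,M-t\}}{M-m}\left(\frac{f(m)+f(M)}{2}-f\left(\frac{m+M}{2}\right)\right)$. *)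

theory Defs
  imports "HOL-Analysis.Analysis" "HOL-Computational_Algebra.Polynomial"
begin

text \<open>HOL-Analysis only provides real inner product spaces, so we introduce complex
  inner product spaces (inner product conjugate-linear in the first argument) and
  complex Hilbert spaces (complete ones) as type classes.\<close>

class complex_inner = real_normed_vector +
  fixes cscale :: "complex \<Rightarrow> 'a \<Rightarrow> 'a"
    and cinner :: "'a \<Rightarrow> 'a \<Rightarrow> complex"
  assumes cscale_add_right: "cscale a (x + y) = cscale a x + cscale a y"
    and cscale_add_left: "cscale (a + b) x = cscale a x + cscale b x"
    and cscale_cscale: "cscale a (cscale b x) = cscale (a * b) x"
    and cscale_one: "cscale 1 x = x"
    and scaleR_cscale: "scaleR r x = cscale (complex_of_real r) x"
    and cinner_commute: "cinner x y = cnj (cinner y x)"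
    and cinner_add_left: "cinner (x + y) z = cinner x z + cinner y z"
    and cinner_cscale_left: "cinner (cscale a x) y = cnj a * cinner x y"
    and cinner_self_Im: "Im (cinner x x) = 0"
    and cinner_self_nonneg: "0 \<le> Re (cinner x x)"
    and cinner_self_eq_0: "cinner x x = 0 \<longleftrightarrow> x = 0"
    and norm_eq_sqrt_cinner: "norm x = sqrt (Re (cinner x x))"

class chilbert_space = complex_inner + complete_space

text \<open>Operators are represented as functions on the space; B(H) consists of the
  complex-linear bounded ones.\<close>

definition clinear_op :: "('a::complex_inner \<Rightarrow> 'a) \<Rightarrow> bool" where
  "clinear_op T \<longleftrightarrow> (\<forall>x y. T (x + y) = T x + T y) \<and> (\<forall>c x. T (cscale c x) = cscale c (T x))"

definition bounded_op :: "('a::complex_inner \<Rightarrow> 'a) \<Rightarrow> bool" where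
  "bounded_op T \<longleftrightarrow> clinear_op T \<and> (\<exists>K. \<forall>x. norm (T x) \<le> K * norm x)"

definition op_le :: "('a::complex_inner \<Rightarrow> 'a) \<Rightarrow> ('a \<Rightarrow> 'a) \<Rightarrow> bool" where
  "op_le X Y \<longleftrightarrow> (\<forall>x. Im (cinner x (Y x - X x)) = 0 \<and> 0 \<le> Re (cinner x (Y x - X x)))"

definition scal_op :: "real \<Rightarrow> 'a::complex_inner \<Rightarrow> 'a" where
  "scal_op c = (\<lambda>x. scaleR c x)"

text \<open>Real spectrum: the reals \<open>t\<close> for which \<open>T - t I\<close> is not invertible
  (for a bounded operator bijectivity already gives a bounded inverse).\<close>

definition op_spectrum :: "('a::complex_inner \<Rightarrow> 'a) \<Rightarrow> real set" where
  "op_spectrum T = {t. \<not> bij (\<lambda>x. T x - scaleR t x)}"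

definition poly_op :: "real poly \<Rightarrow> ('a::complex_inner \<Rightarrow> 'a) \<Rightarrow> 'a \<Rightarrow> 'a" where
  "poly_op p T = (\<lambda>x. \<Sum>i\<le>degree p. scaleR (coeff p i) ((T ^^ i) x))"

text \<open>Continuous functional calculus of a self-adjoint operator \<open>T\<close>: \<open>f(T)\<close> is the
  operator-norm limit of \<open>p_n(T)\<close> for every sequence of real polynomials \<open>p_n\<close>
  converging uniformly to \<open>f\<close> on the spectrum of \<open>T\<close>.\<close>

definition cfc :: "('a::complex_inner \<Rightarrow> 'a) \<Rightarrow> (real \<Rightarrow> real) \<Rightarrow> 'a \<Rightarrow> 'a" where
  "cfc T f = (THE B. bounded_op B \<and>
     (\<forall>P :: nat \<Rightarrow> real poly.
        (\<forall>e>0. \<exists>N. \<forall>n\<ge>N. \<forall>t\<in>op_spectrum T. \<bar>poly (P n) t - f t\<bar> < e) \<longrightarrow>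
        ((\<lambda>n. onorm (\<lambda>x. poly_op (P n) T x - B x)) \<longlonglongrightarrow> 0)))"

definition positive_unital_linear_map ::
  "(('a::complex_inner \<Rightarrow> 'a) \<Rightarrow> ('b::complex_inner \<Rightarrow> 'b)) \<Rightarrow> bool" where
  "positive_unital_linear_map \<phi> \<longleftrightarrow>
     (\<forall>X. bounded_op X \<longrightarrow> bounded_op (\<phi> X)) \<and>
     (\<forall>X Y. bounded_op X \<longrightarrow> bounded_op Y \<longrightarrow> \<phi> (\<lambda>x. X x + Y x) = (\<lambda>y. \<phi> X y + \<phi> Y y)) \<and>
     (\<forall>c X. bounded_op X \<longrightarrow> \<phi> (\<lambda>x. cscale c (X x)) = (\<lambda>y. cscale c (\<phi> X y))) \<and>
     (\<forall>X. bounded_op X \<longrightarrow> op_le (\<lambda>x. 0) X \<longrightarrow> op_le (\<lambda>y. 0) (\<phi> X)) \<and>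
     \<phi> (\<lambda>x. x) = (\<lambda>y. y)"

definition a_f :: "(real \<Rightarrow> real) \<Rightarrow> real \<Rightarrow> real \<Rightarrow> real" where
  "a_f f m M = (f M - f m) / (M - m)"

definition b_f :: "(real \<Rightarrow> real) \<Rightarrow> real \<Rightarrow> real \<Rightarrow> real" where
  "b_f f m M = (M * f m - m * f M) / (M - m)"

definition alpha_f :: "(real \<Rightarrow> real) \<Rightarrow> real \<Rightarrow> real \<Rightarrow> real \<Rightarrow> real" where
  "alpha_f f m M t0 = a_f f m M / deriv f t0"

definition beta_f :: "(real \<Rightarrow> real) \<Rightarrow> real \<Rightarrow> real \<Rightarrow> real \<Rightarrow> real" where
  "beta_f f m M t0 = a_f f m M * t0 + b_f f m M - a_f f m M * f t0 / deriv f t0"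

definition op_min :: "(real \<Rightarrow> real) \<Rightarrow> real \<Rightarrow> real \<Rightarrow> ('a::complex_inner \<Rightarrow> 'a) \<Rightarrow> 'a \<Rightarrow> 'a" where
  "op_min f m M X = cfc X (\<lambda>t. 2 * min (t - m) (M - t) / (M - m) *
                              ((f m + f M) / 2 - f ((m + M) / 2)))"

end

theory Submission
  imports Defs "HOL-Computational_Algebra.Fundamental_Theorem_Algebra"
begin

lemma div_sq_mult: "(k::complex) \<noteq> 0 \<Longrightarrow> a / (k * k) * k = a / k"
  by (simp add: field_simps)

lemma cnj_mult_self: "cnj a * a = complex_of_real ((cmod a)^2)"
  by (metis complex_norm_square mult.commute of_real_power)


lemma cinner_add_right: "cinner (x::'a::complex_inner) (y + z) = cinner x y + cinner x z"
  by (metis cinner_commute cinner_add_left complex_cnj_add)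

lemma cinner_cscale_right: "cinner x (cscale a y) = a * cinner x y"
  by (metis cinner_commute cinner_cscale_left complex_cnj_cnj complex_cnj_mult)

lemma cinner_zero_left[simp]: "cinner 0 y = 0"
  using cinner_add_left[of 0 0 y] by simp

lemma cinner_zero_right[simp]: "cinner x 0 = 0"
  using cinner_add_right[of x 0 0] by simp

lemma cinner_minus_left: "cinner (- x) y = - cinner x y"
  proof -
  have "cinner x y + cinner (-x) y = 0" using cinner_add_left[of x "-x" y] by simp
  thus ?thesis by (simp add: add_eq_0_iff)
qed

lemma cinner_minus_right: "cinner x (- y) = - cinner x y"
  proof -
  have "cinner x y + cinner x (-y) = 0" using cinner_add_right[of x y "-y"] by simp
  thus ?thesis by (simp add: add_eq_0_iff)
qed

lemma cinner_diff_left: "cinner (x - y) z = cinner x z - cinner y z"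
  using cinner_add_left[of x "-y" z] by (simp add: cinner_minus_left)

lemma cinner_diff_right: "cinner x (y - z) = cinner x y - cinner x z"
  using cinner_add_right[of x y "-z"] by (simp add: cinner_minus_right)

lemma cinner_scaleR_left: "cinner (r *\<^sub>R x) y = of_real r * cinner x y"
  by (simp add: scaleR_cscale cinner_cscale_left)

lemma cinner_scaleR_right: "cinner x (r *\<^sub>R y) = of_real r * cinner x y"
  by (simp add: scaleR_cscale cinner_cscale_right)

lemma cinner_self_real: "cinner x x = of_real ((norm x)^2)"
proof -
  have "(norm x)^2 = Re (cinner x x)" using norm_eq_sqrt_cinner[of x] cinner_self_nonneg[of x] by simp
  thus ?thesis using cinner_self_Im[of x] by (simp add: complex_eq_iff)
qed

lemma cinner_sum_left: "cinner (sum f S) y = (\<Sum>i\<in>S. cinner (f i) y)"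
  by (induction S rule: infinite_finite_induct) (auto simp: cinner_add_left)

lemma cinner_sum_right: "cinner y (sum f S) = (\<Sum>i\<in>S. cinner y (f i))"
  by (induction S rule: infinite_finite_induct) (auto simp: cinner_add_right)

lemma cscale_zero_right[simp]: "cscale a 0 = 0"
  using cscale_add_right[of a 0 0] by simp

lemma cscale_zero_left[simp]: "cscale 0 x = 0"
  using cscale_add_left[of 0 0 x] by simp

lemma norm_cscale: "norm (cscale a x) = cmod a * norm x"
proof -
  have "cinner (cscale a x) (cscale a x) = cnj a * a * cinner x x"
    by (simp add: cinner_cscale_left cinner_cscale_right)
  also have "\<dots> = of_real ((cmod a)^2 * (norm x)^2)"
    by (simp add: cinner_self_real cnj_mult_self)
  finally have "complex_of_real ((norm (cscale a x))^2) = of_real ((cmod a * norm x)^2)"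
    using cinner_self_real[of "cscale a x"] by (simp add: power_mult_distrib)
  hence "(norm (cscale a x))^2 = (cmod a * norm x)^2" using of_real_eq_iff by blast
  thus ?thesis by (rule power2_eq_imp_eq) auto
qed

lemma cinner_cauchy_schwarz: "cmod (cinner x y) \<le> norm x * norm y"
proof (cases "y = 0")
  case True thus ?thesis by simp
next
  case False
  define c where "c = cinner y x / of_real ((norm y)^2)"
  have ny: "norm y > 0" using False by simp
  have "0 \<le> Re (cinner (x - cscale c y) (x - cscale c y))" by (rule cinner_self_nonneg)
  also have "cinner (x - cscale c y) (x - cscale c y) =
     cinner x x - c * cinner x y - cnj c * cinner y x + cnj c * c * cinner y y"
    by (simp add: cinner_diff_left cinner_diff_right cinner_cscale_left cinner_cscale_right algebra_simps)
  also have "\<dots> = of_real ((norm x)^2 - (cmod (cinner x y))^2 / (norm y)^2)"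
  proof -
    define w where "w = cinner x y"
    define n where "n = norm y"
    have cw: "cinner y x = cnj w" unfolding w_def by (rule cinner_commute)
    have c: "c = cnj w / of_real (n^2)" unfolding c_def n_def cw ..
    have nz: "complex_of_real (n^2) \<noteq> 0" using ny n_def by simp
    have ww: "cnj w * w = of_real ((cmod w)^2)" by (rule cnj_mult_self)
    have ww2: "w * cnj w = of_real ((cmod w)^2)" using ww by (simp add: mult.commute)
    have e1: "c * w = of_real ((cmod w)^2 / n^2)" unfolding c using ww by simp
    have e2: "cnj c * cnj w = of_real ((cmod w)^2 / n^2)" unfolding c using ww2 by simp
    have e3: "cnj c * c * cinner y y = of_real ((cmod w)^2 / n^2)"
    proof -
      have "cnj c * c * cinner y y = (w * cnj w) / (of_real (n^2) * of_real (n^2)) * of_real (n^2)"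
        unfolding c by (simp add: cinner_self_real n_def)
      also have "\<dots> = (w * cnj w) / of_real (n^2)" using nz by (rule div_sq_mult)
      finally show ?thesis using ww2 by simp
    qed
    show ?thesis using e1 e2 e3 by (simp add: cinner_self_real cw flip: w_def n_def)
  qed
  finally have "(cmod (cinner x y))^2 / (norm y)^2 \<le> (norm x)^2" by simp
  hence "cmod (cinner x y)^2 \<le> (norm x * norm y)^2"
    using ny by (simp add: field_simps power_mult_distrib)
  thus ?thesis by (rule power2_le_imp_le) simp
qed

definition herm :: "('a::complex_inner \<Rightarrow> 'a) \<Rightarrow> bool" where
  "herm T \<longleftrightarrow> (\<forall>x y. cinner (T x) y = cinner x (T y))"

definition psd :: "('a::complex_inner \<Rightarrow> 'a) \<Rightarrow> bool" where
  "psd T \<longleftrightarrow> (\<forall>x. Im (cinner x (T x)) = 0 \<and> 0 \<le> Re (cinner x (T x)))"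

lemma op_le_psd: "op_le X Y \<longleftrightarrow> psd (\<lambda>x. Y x - X x)"
  by (simp add: op_le_def psd_def)

lemma clinear_add: "clinear_op T \<Longrightarrow> T (x + y) = T x + T y"
  by (simp add: clinear_op_def)

lemma clinear_cscale: "clinear_op T \<Longrightarrow> T (cscale c x) = cscale c (T x)"
  by (simp add: clinear_op_def)

lemma clinear_scaleR: "clinear_op T \<Longrightarrow> T (r *\<^sub>R x) = r *\<^sub>R T x"
  by (simp add: clinear_op_def scaleR_cscale)

lemma clinear_zero: "clinear_op T \<Longrightarrow> T 0 = 0"
  using clinear_scaleR[of T 0 0] by simp

lemma clinear_minus: "clinear_op T \<Longrightarrow> T (- x) = - T x"
  using clinear_scaleR[of T "-1" x] by simp

lemma clinear_diff: "clinear_op T \<Longrightarrow> T (x - y) = T x - T y"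
  using clinear_add[of T x "-y"] clinear_minus[of T y] by simp

lemma clinear_sum: "clinear_op T \<Longrightarrow> T (sum f S) = (\<Sum>i\<in>S. T (f i))"
  by (induction S rule: infinite_finite_induct) (auto simp: clinear_add clinear_zero)

lemma clinear_linear: "clinear_op T \<Longrightarrow> linear T"
  by (rule linearI) (auto simp: clinear_add clinear_scaleR)

lemma bounded_op_clinear: "bounded_op T \<Longrightarrow> clinear_op T"
  by (simp add: bounded_op_def)

lemma bounded_op_bound: fixes T :: "'a::complex_inner \<Rightarrow> 'a" shows "bounded_op T \<Longrightarrow> \<exists>K>0. \<forall>x. norm (T x) \<le> K * norm x"
proof -
  assume "bounded_op T"
  then obtain K where K: "\<forall>x. norm (T x) \<le> K * norm x" by (auto simp: bounded_op_def)
  have "\<forall>x. norm (T x) \<le> (max K 0 + 1) * norm x"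
  proof
    fix x :: 'a
    have "K * norm x \<le> (max K 0 + 1) * norm x" by (intro mult_right_mono) auto
    thus "norm (T x) \<le> (max K 0 + 1) * norm x" using K by (meson order_trans)
  qed
  thus ?thesis by (intro exI[of _ "max K 0 + 1"]) auto
qed

lemma bounded_op_bounded_linear: "bounded_op T \<Longrightarrow> bounded_linear T"
proof -
  assume a: "bounded_op T"
  then obtain K where K: "\<forall>x. norm (T x) \<le> K * norm x" by (auto simp: bounded_op_def)
  show ?thesis
    by (rule bounded_linear_intro[where K=K]) (use a K in \<open>auto simp: bounded_op_def clinear_add clinear_scaleR mult.commute\<close>)
qed

lemma cscale_clinear: "clinear_op (\<lambda>x::'a::complex_inner. cscale c x)"
  by (simp add: clinear_op_def cscale_add_right cscale_cscale mult.commute)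

lemma bounded_op_cscale_id: "bounded_op (\<lambda>x::'a::complex_inner. cscale c x)"
  unfolding bounded_op_def using cscale_clinear by (auto simp: norm_cscale intro!: exI[of _ "cmod c"])

lemma bounded_op_id: "bounded_op (\<lambda>x::'a::complex_inner. x)"
  unfolding bounded_op_def clinear_op_def by (auto intro!: exI[of _ 1])

lemma bounded_op_zero: "bounded_op (\<lambda>x::'a::complex_inner. 0)"
  unfolding bounded_op_def clinear_op_def by (auto intro!: exI[of _ 0])

lemma bounded_op_add:
  assumes "bounded_op X" "bounded_op Y" shows "bounded_op (\<lambda>x. X x + Y x)"
proof -
  obtain K1 where K1: "\<forall>x. norm (X x) \<le> K1 * norm x" using assms by (auto simp: bounded_op_def)
  obtain K2 where K2: "\<forall>x. norm (Y x) \<le> K2 * norm x" using assms by (auto simp: bounded_op_def)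
  have "\<forall>x. norm (X x + Y x) \<le> (K1 + K2) * norm x"
  proof
    fix x
    have "norm (X x + Y x) \<le> norm (X x) + norm (Y x)" by (rule norm_triangle_ineq)
    also have "\<dots> \<le> K1 * norm x + K2 * norm x" using K1 K2 by (intro add_mono) auto
    finally show "norm (X x + Y x) \<le> (K1 + K2) * norm x" by (simp add: distrib_right)
  qed
  moreover have "clinear_op (\<lambda>x. X x + Y x)"
    using assms by (simp add: clinear_op_def bounded_op_def cscale_add_right)
  ultimately show ?thesis unfolding bounded_op_def by blast
qed

lemma bounded_op_comp:
  assumes "bounded_op X" "bounded_op Y" shows "bounded_op (\<lambda>x. X (Y x))"
proof -
  obtain K1 where K1: "K1 > 0" "\<forall>x. norm (X x) \<le> K1 * norm x" using assms bounded_op_bound by blast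
  obtain K2 where K2: "\<forall>x. norm (Y x) \<le> K2 * norm x" using assms by (auto simp: bounded_op_def)
  have "\<forall>x. norm (X (Y x)) \<le> (K1 * K2) * norm x"
  proof
    fix x
    have "norm (X (Y x)) \<le> K1 * norm (Y x)" using K1 by auto
    also have "\<dots> \<le> K1 * (K2 * norm x)" using K1 K2 by (intro mult_left_mono) auto
    finally show "norm (X (Y x)) \<le> (K1 * K2) * norm x" by (simp add: mult.assoc)
  qed
  moreover have "clinear_op (\<lambda>x. X (Y x))"
    using assms by (simp add: clinear_op_def bounded_op_def)
  ultimately show ?thesis unfolding bounded_op_def by blast
qed

lemma bounded_op_scaleR:
  assumes "bounded_op X" shows "bounded_op (\<lambda>x. r *\<^sub>R X x)"
proof -
  have "bounded_op (\<lambda>x. cscale (of_real r) (X x))"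
    by (rule bounded_op_comp[OF bounded_op_cscale_id assms])
  thus ?thesis by (simp add: scaleR_cscale)
qed

lemma bounded_op_diff:
  assumes "bounded_op X" "bounded_op Y" shows "bounded_op (\<lambda>x. X x - Y x)"
  using bounded_op_add[OF assms(1) bounded_op_scaleR[OF assms(2), of "-1"]] by simp

lemma bounded_op_scal: "bounded_op (scal_op c :: 'a::complex_inner \<Rightarrow> 'a)"
  unfolding scal_op_def using bounded_op_scaleR[OF bounded_op_id] .

lemma herm_from_real:
  assumes T: "clinear_op T" and re: "\<And>x. Im (cinner x (T x)) = 0"
  shows "herm T"
proof -
  define D where "D x y = cinner x (T y) - cinner (T x) y" for x y
  have D0: "D z z = 0" for z
  proof -
    have "cinner (T z) z = cnj (cinner z (T z))" by (rule cinner_commute)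
    also have "\<dots> = cinner z (T z)" using re[of z] by (simp add: complex_eq_iff)
    finally show ?thesis by (simp add: D_def)
  qed
  have Dadd: "D (x + y) (x + y) = D x x + D x y + D y x + D y y" for x y
    by (simp add: D_def clinear_add[OF T] cinner_add_left cinner_add_right)
  have Dcs: "D (x + cscale \<i> y) (x + cscale \<i> y) = D x x + \<i> * D x y - \<i> * D y x + D y y" for x y
    by (simp add: D_def clinear_add[OF T] clinear_cscale[OF T] cinner_add_left cinner_add_right
        cinner_cscale_left cinner_cscale_right algebra_simps)
  have "D x y = 0" for x y
  proof -
    have 1: "D x y + D y x = 0" using Dadd[of x y] D0 by simp
    have 2: "\<i> * D x y - \<i> * D y x = 0" using Dcs[of x y] D0 by simp
    hence "\<i> * (D x y - D y x) = 0" by (simp add: right_diff_distrib)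
    hence "D x y - D y x = 0" by simp
    with 1 show ?thesis by (simp add: add_eq_0_iff)
  qed
  thus ?thesis unfolding herm_def D_def by simp
qed

lemma herm_real: "herm T \<Longrightarrow> Im (cinner x (T x)) = 0"
proof -
  assume "herm T"
  hence "cinner x (T x) = cinner (T x) x" by (simp add: herm_def)
  also have "\<dots> = cnj (cinner x (T x))" by (rule cinner_commute)
  finally have "Im (cinner x (T x)) = Im (cnj (cinner x (T x)))" by simp
  thus ?thesis by simp
qed

lemma parallelogram:
  fixes x y :: "'a::complex_inner"
  shows "(norm (x + y))^2 + (norm (x - y))^2 = 2 * (norm x)^2 + 2 * (norm y)^2"
proof -
  have "complex_of_real ((norm (x + y))^2 + (norm (x - y))^2) = cinner (x + y) (x + y) + cinner (x - y) (x - y)"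
    by (simp add: cinner_self_real)
  also have "\<dots> = 2 * cinner x x + 2 * cinner y y"
    by (simp add: cinner_add_left cinner_add_right cinner_diff_left cinner_diff_right)
  also have "\<dots> = complex_of_real (2 * (norm x)^2 + 2 * (norm y)^2)"
    by (simp add: cinner_self_real)
  finally show ?thesis using of_real_eq_iff by blast
qed

lemma herm_re_swap:
  assumes "herm S"
  shows "Re (cinner y (S x)) = Re (cinner (S x) y)"
  using cinner_commute[of y "S x"] by simp

lemma qf_norm_bound:
  fixes S :: "'a::complex_inner \<Rightarrow> 'a"
  assumes S: "clinear_op S" "herm S"
    and b: "\<And>x. \<bar>Re (cinner x (S x))\<bar> \<le> s * (norm x)^2"
  shows "norm (S x) \<le> s * norm x"
proof -
  have key: "4 * Re (cinner (S x) y) \<le> 2 * s * ((norm x)^2 + (norm y)^2)" for x y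
  proof -
    have "cinner (x + y) (S (x + y)) - cinner (x - y) (S (x - y)) = 2 * cinner x (S y) + 2 * cinner y (S x)"
      by (simp add: clinear_add[OF S(1)] clinear_diff[OF S(1)] cinner_add_left cinner_add_right
          cinner_diff_left cinner_diff_right)
    hence "Re (cinner (x + y) (S (x + y))) - Re (cinner (x - y) (S (x - y))) =
        2 * Re (cinner x (S y)) + 2 * Re (cinner y (S x))"
      by (metis Re_complex_of_real minus_complex.sel plus_complex.sel times_complex.sel
          Im_complex_of_real mult_zero_left diff_zero numeral_One of_real_numeral)
    also have "Re (cinner x (S y)) = Re (cinner (S x) y)" using S(2) by (simp add: herm_def)
    also have "Re (cinner y (S x)) = Re (cinner (S x) y)" by (rule herm_re_swap[OF S(2)])
    finally have e: "4 * Re (cinner (S x) y) = Re (cinner (x + y) (S (x + y))) - Re (cinner (x - y) (S (x - y)))"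
      by simp
    have "Re (cinner (x + y) (S (x + y))) \<le> s * (norm (x + y))^2" using b[of "x + y"] by simp
    moreover have "- Re (cinner (x - y) (S (x - y))) \<le> s * (norm (x - y))^2" using b[of "x - y"] by simp
    ultimately have "4 * Re (cinner (S x) y) \<le> s * ((norm (x + y))^2 + (norm (x - y))^2)"
      unfolding e by (simp add: distrib_left)
    also have "\<dots> = 2 * s * ((norm x)^2 + (norm y)^2)" unfolding parallelogram by (simp add: algebra_simps)
    finally show ?thesis .
  qed
  show ?thesis
  proof (cases "x = 0")
    case True thus ?thesis using clinear_zero[OF S(1)] by simp
  next
    case False
    hence nx: "norm x > 0" by simp
    have s0: "s \<ge> 0"
    proof -
      have "0 \<le> s * (norm x)^2" using b[of x] by (meson abs_ge_zero order_trans)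
      thus ?thesis using nx by (simp add: zero_le_mult_iff)
    qed
    show ?thesis
    proof (cases "S x = 0")
      case True thus ?thesis using s0 by simp
    next
      case False
      hence nS: "norm (S x) > 0" by simp
      define t where "t = norm x / norm (S x)"
      have t0: "t > 0" using nx nS by (simp add: t_def)
      have "Re (cinner (S x) (t *\<^sub>R S x)) = t * (norm (S x))^2"
        by (simp add: cinner_scaleR_right cinner_self_real)
      also have "\<dots> = norm x * norm (S x)" using nS by (simp add: t_def power2_eq_square)
      finally have l: "Re (cinner (S x) (t *\<^sub>R S x)) = norm x * norm (S x)" .
      have "(norm (t *\<^sub>R S x))^2 = (norm x)^2" using nS t0 by (simp add: t_def power_mult_distrib power_divide)
      hence "4 * (norm x * norm (S x)) \<le> 2 * s * ((norm x)^2 + (norm x)^2)"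
        using key[of x "t *\<^sub>R S x"] l by simp
      hence "norm x * norm (S x) \<le> norm x * (s * norm x)" by (simp add: power2_eq_square algebra_simps)
      thus ?thesis using nx by simp
    qed
  qed
qed

lemma pos_cs:
  fixes R :: "'a::complex_inner \<Rightarrow> 'a"
  assumes R: "clinear_op R" "herm R" "psd R" and D: "D \<ge> 0" "\<And>z. norm (R z) \<le> D * norm z"
  shows "(norm (R x))^2 \<le> D * Re (cinner x (R x))"
proof -
  define y where "y = R x"
  define N where "N = (norm (R x))^2"
  define P where "P = Re (cinner x (R x))"
  define Q where "Q = Re (cinner y (R y))"
  have QN: "Q \<le> D * N"
  proof -
    have "Q \<le> cmod (cinner y (R y))" unfolding Q_def by (rule complex_Re_le_cmod)
    also have "\<dots> \<le> norm y * norm (R y)" by (rule cinner_cauchy_schwarz)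
    also have "\<dots> \<le> norm y * (D * norm y)" by (intro mult_left_mono D) auto
    finally show ?thesis by (simp add: N_def y_def power2_eq_square algebra_simps)
  qed
  have e1': "cinner x (R y) = cinner (R x) (R x)" using R(2) unfolding herm_def y_def by simp
  have e2: "cinner y (R x) = of_real N" by (simp add: y_def N_def cinner_self_real)
  have quad: "0 \<le> P - 2 * t * N + t^2 * Q" for t :: real
  proof -
    have "0 \<le> Re (cinner (x - t *\<^sub>R y) (R (x - t *\<^sub>R y)))" using R(3) by (simp add: psd_def)
    also have "cinner (x - t *\<^sub>R y) (R (x - t *\<^sub>R y)) =
        cinner x (R x) - of_real t * cinner x (R y) - of_real t * cinner y (R x) + of_real t * of_real t * cinner y (R y)"
      by (simp add: clinear_diff[OF R(1)] clinear_scaleR[OF R(1)] cinner_diff_left cinner_diff_right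
          cinner_scaleR_left cinner_scaleR_right algebra_simps)
    also have "Re \<dots> = P - 2 * t * N + t^2 * Q"
      using e1' e2 by (simp add: P_def Q_def N_def cinner_self_real power2_eq_square)
    finally show ?thesis .
  qed
  show ?thesis
  proof (cases "D = 0")
    case True
    hence "norm (R x) \<le> 0" using D(2)[of x] by simp
    thus ?thesis using True by simp
  next
    case False
    hence Dp: "D > 0" using D by simp
    have "0 \<le> P - 2 * (1/D) * N + (1/D)^2 * Q" by (rule quad)
    also have "(1/D)^2 * Q \<le> (1/D)^2 * (D * N)" by (intro mult_left_mono QN) auto
    finally have "0 \<le> P - N / D" using Dp by (simp add: power2_eq_square field_simps)
    hence "N \<le> D * P" using Dp by (simp add: field_simps)
    thus ?thesis by (simp add: N_def P_def)
  qed
qed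

lemma posdef_bij:
  fixes S :: "'a::chilbert_space \<Rightarrow> 'a"
  assumes S: "bounded_op S" "herm S" and c: "c > 0" and pd: "\<And>x. c * (norm x)^2 \<le> Re (cinner x (S x))"
  shows "bij S"
proof -
  have Sl: "clinear_op S" using S(1) by (rule bounded_op_clinear)
  obtain K where K: "K > 0" "\<And>x. norm (S x) \<le> K * norm x" using bounded_op_bound[OF S(1)] by blast
  define D where "D = K + c"
  have D0: "D > 0" using K c by (simp add: D_def)
  define q where "q = 1 - c / D"
  have q: "0 \<le> q" "q < 1" using c K D0 by (auto simp: q_def D_def field_simps)
  define Kp where "Kp x = x - (1 / D) *\<^sub>R S x" for x
  have "bounded_op Kp"
    unfolding Kp_def by (rule bounded_op_diff[OF bounded_op_id bounded_op_scaleR[OF S(1)]])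
  hence Kpl: "clinear_op Kp" by (rule bounded_op_clinear)
  have Kph: "herm Kp"
    using S(2) unfolding herm_def Kp_def by (simp add: cinner_diff_left cinner_diff_right cinner_scaleR_left cinner_scaleR_right)
  have Kpb: "\<bar>Re (cinner x (Kp x))\<bar> \<le> q * (norm x)^2" for x
  proof -
    have e: "Re (cinner x (Kp x)) = (norm x)^2 - Re (cinner x (S x)) / D"
      by (simp add: Kp_def cinner_diff_right cinner_scaleR_right cinner_self_real)
    have "Re (cinner x (S x)) \<le> cmod (cinner x (S x))" by (rule complex_Re_le_cmod)
    also have "\<dots> \<le> norm x * norm (S x)" by (rule cinner_cauchy_schwarz)
    also have "\<dots> \<le> norm x * (K * norm x)" by (intro mult_left_mono K) auto
    also have "\<dots> \<le> D * (norm x)^2" using c by (simp add: D_def power2_eq_square algebra_simps)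
    finally have u: "Re (cinner x (S x)) / D \<le> (norm x)^2" using D0 by (simp add: field_simps)
    have l: "c * (norm x)^2 / D \<le> Re (cinner x (S x)) / D" using pd[of x] D0 by (simp add: divide_right_mono)
    have "Re (cinner x (Kp x)) \<ge> 0" using e u by simp
    moreover have "Re (cinner x (Kp x)) \<le> q * (norm x)^2" using e l by (simp add: q_def algebra_simps)
    ultimately show ?thesis by simp
  qed
  have Kpn: "norm (Kp x) \<le> q * norm x" for x
    by (rule qf_norm_bound[OF Kpl Kph Kpb])
  have surj: "\<exists>z. S z = y" for y
  proof -
    define f where "f z = Kp z + (1 / D) *\<^sub>R y" for z
    have "\<forall>a b. dist (f a) (f b) \<le> q * dist a b"
      by (auto simp: f_def dist_norm clinear_diff[OF Kpl, symmetric] Kpn)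
    then obtain z where "f z = z" using banach_fix_type[OF q] by blast
    hence "S z = y" using D0 by (auto simp: f_def Kp_def algebra_simps)
    thus ?thesis by blast
  qed
  have inj: "inj S"
  proof (rule injI)
    fix a b assume "S a = S b"
    hence "S (a - b) = 0" by (simp add: clinear_diff[OF Sl])
    hence "c * (norm (a - b))^2 \<le> 0" using pd[of "a - b"] by simp
    hence "norm (a - b) = 0" using c by (simp add: mult_le_0_iff)
    thus "a = b" by simp
  qed
  show ?thesis using inj surj unfolding bij_def surj_def by metis
qed

lemma cinner_bounded_linear: "bounded_linear (\<lambda>y. cinner (a::'a::complex_inner) y)"
proof (rule bounded_linear_intro[where K="norm a"])
  show "cinner a (x + y) = cinner a x + cinner a y" for x y by (rule cinner_add_right)
  show "cinner a (r *\<^sub>R x) = r *\<^sub>R cinner a x" for r x by (simp add: cinner_scaleR_right scaleR_conv_of_real)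
  show "norm (cinner a x) \<le> norm x * norm a" for x using cinner_cauchy_schwarz[of a x] by (simp add: mult.commute)
qed

lemma bij_bounded_below:
  fixes S :: "'a::chilbert_space \<Rightarrow> 'a"
  assumes S: "bounded_op S" "herm S" and b: "bij S"
  shows "\<exists>C>0. \<forall>x. norm x \<le> C * norm (S x)"
proof -
  have Sl: "clinear_op S" using S(1) by (rule bounded_op_clinear)
  define G where "G = inv S"
  have SG: "S (G y) = y" for y using b unfolding G_def by (simp add: bij_is_surj surj_f_inv_f)
  have GS: "G (S x) = x" for x using b unfolding G_def by (simp add: bij_is_inj)
  have Gs: "G (r *\<^sub>R y) = r *\<^sub>R G y" for r y
    by (metis GS SG clinear_scaleR[OF Sl])
  have sym: "cinner (G x) y = cinner x (G y)" for x y
  proof -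
    have "cinner (G x) y = cinner (G x) (S (G y))" by (simp add: SG)
    also have "\<dots> = cinner (S (G x)) (G y)" using S(2) by (simp add: herm_def)
    finally show ?thesis by (simp add: SG)
  qed
  define F where "F k = (\<Inter>x\<in>{x. norm x \<le> 1}. {y. cmod (cinner (G x) y) \<le> real k})" for k :: nat
  have Fc: "closed (F k)" for k
    unfolding F_def
    by (intro closed_INT ballI closed_Collect_le continuous_on_norm
        linear_continuous_on[OF cinner_bounded_linear] continuous_on_const)
  have Fu: "\<Union>(range F) = UNIV"
  proof -
    have "y \<in> F (nat \<lceil>norm (G y)\<rceil>)" for y
    proof -
      have "cmod (cinner (G x) y) \<le> real (nat \<lceil>norm (G y)\<rceil>)" if "norm x \<le> 1" for x
      proof -
        have "cmod (cinner (G x) y) \<le> norm x * norm (G y)" unfolding sym by (rule cinner_cauchy_schwarz)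
        also have "\<dots> \<le> 1 * norm (G y)" using that by (intro mult_right_mono) auto
        also have "\<dots> \<le> real (nat \<lceil>norm (G y)\<rceil>)" by linarith
        finally show ?thesis .
      qed
      thus ?thesis by (auto simp: F_def)
    qed
    thus ?thesis by blast
  qed
  have "\<exists>k. interior (F k) \<noteq> {}"
  proof (rule ccontr)
    assume "\<not> ?thesis"
    hence "euclidean interior_of \<Union>(range F) = {}"
      by (intro Baire_category_alt) (auto simp: completely_metrizable_space_euclidean Fc simp flip: closed_closedin)
    thus False using Fu by simp
  qed
  then obtain k where "interior (F k) \<noteq> {}" by blast
  then obtain y0 where "y0 \<in> interior (F k)" by blast
  then obtain r where r: "r > 0" "ball y0 r \<subseteq> F k" by (meson interior_subset open_contains_ball open_interior subset_trans)
  have bnd: "cmod (cinner (G x) z) \<le> 2 * real k" if "norm x \<le> 1" "norm z < r" for x z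
  proof -
    have "y0 + z \<in> F k" "y0 \<in> F k" using r that by (auto simp: dist_norm)
    hence "cmod (cinner (G x) (y0 + z)) \<le> real k" "cmod (cinner (G x) y0) \<le> real k"
      using that by (auto simp: F_def)
    moreover have "cinner (G x) z = cinner (G x) (y0 + z) - cinner (G x) y0" by (simp add: cinner_add_right)
    ultimately show ?thesis by (metis norm_triangle_ineq4 add_mono order_trans mult_2)
  qed
  define C0 where "C0 = 4 * real k / r"
  have G1: "norm (G x) \<le> C0" if "norm x \<le> 1" for x
  proof (cases "G x = 0")
    case True thus ?thesis using r by (simp add: C0_def)
  next
    case False
    define z where "z = (r / 2 / norm (G x)) *\<^sub>R G x"
    have "norm z = r / 2" using False r by (simp add: z_def)
    hence "norm z < r" using r by simp
    hence "cmod (cinner (G x) z) \<le> 2 * real k" using bnd that by blast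
    moreover have "cinner (G x) z = of_real (r / 2 * norm (G x))"
      using False by (simp add: z_def cinner_scaleR_right cinner_self_real power2_eq_square)
    moreover have "cmod (complex_of_real (r / 2 * norm (G x))) = r / 2 * norm (G x)"
      using r by (simp only: norm_of_real) simp
    ultimately have "r / 2 * norm (G x) \<le> 2 * real k" by simp
    thus ?thesis using r by (simp add: C0_def field_simps)
  qed
  have G2: "norm (G x) \<le> C0 * norm x" for x
  proof (cases "x = 0")
    case True
    hence "G x = 0" by (metis GS clinear_zero[OF Sl])
    thus ?thesis using True by simp
  next
    case False
    have "norm (G ((1 / norm x) *\<^sub>R x)) \<le> C0" by (rule G1) (use False in simp)
    hence "norm (G x) / norm x \<le> C0" by (simp add: Gs)
    thus ?thesis using False by (simp add: field_simps)
  qed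
  have "norm x \<le> (C0 + 1) * norm (S x)" for x
  proof -
    have "norm x \<le> C0 * norm (S x)" using G2[of "S x"] by (simp add: GS)
    also have "\<dots> \<le> (C0 + 1) * norm (S x)" by (simp add: distrib_right)
    finally show ?thesis .
  qed
  moreover have "C0 + 1 > 0" using r by (simp add: C0_def add_nonneg_pos)
  ultimately show ?thesis by blast
qed

lemma not_bij_approx:
  fixes S :: "'a::chilbert_space \<Rightarrow> 'a"
  assumes S: "bounded_op S" "herm S" "psd S"
    and ap: "\<And>e. e > 0 \<Longrightarrow> \<exists>x. norm x = 1 \<and> Re (cinner x (S x)) < e"
  shows "\<not> bij S"
proof
  assume b: "bij S"
  obtain C where C: "C > 0" "\<And>x. norm x \<le> C * norm (S x)" using bij_bounded_below[OF S(1,2) b] by blast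
  obtain K where K: "K > 0" "\<And>x. norm (S x) \<le> K * norm x" using bounded_op_bound[OF S(1)] by blast
  obtain x where x: "norm x = 1" "Re (cinner x (S x)) < 1 / (C * C * K)"
    using ap[of "1 / (C * C * K)"] C K by auto
  have "(norm (S x))^2 \<le> K * Re (cinner x (S x))"
    by (rule pos_cs[OF bounded_op_clinear[OF S(1)] S(2,3)]) (use K in auto)
  also have "\<dots> < K * (1 / (C * C * K))" using x K by (intro mult_strict_left_mono) auto
  also have "K * (1 / (C * C * K)) = 1 / (C * C)" using K by simp
  finally have a: "(norm (S x))^2 < 1 / (C * C)" .
  have "1 \<le> C * norm (S x)" using C(2)[of x] x by simp
  hence "1 \<le> (C * norm (S x))^2" by (simp add: one_le_power)
  hence "1 \<le> C * C * (norm (S x))^2" by (simp add: power2_eq_square algebra_simps)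
  with a C show False by (simp add: field_simps)
qed

definition cev :: "real poly \<Rightarrow> complex \<Rightarrow> complex" where
  "cev p z = (\<Sum>i\<le>degree p. of_real (coeff p i) * z ^ i)"

lemma cev_ext:
  assumes "degree p \<le> N"
  shows "cev p z = (\<Sum>i\<le>N. of_real (coeff p i) * z ^ i)"
proof -
  have "(\<Sum>i\<le>N. of_real (coeff p i) * z ^ i) = (\<Sum>i\<le>degree p. of_real (coeff p i) * z ^ i)"
    by (rule sum.mono_neutral_right) (use assms in \<open>auto simp: coeff_eq_0\<close>)
  thus ?thesis by (simp add: cev_def)
qed

lemma cev_add: "cev (p + q) z = cev p z + cev q z"
proof -
  let ?N = "max (degree p) (degree q)"
  have "cev (p + q) z = (\<Sum>i\<le>?N. of_real (coeff (p + q) i) * z ^ i)"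
    by (rule cev_ext) (rule degree_add_le_max)
  also have "\<dots> = (\<Sum>i\<le>?N. of_real (coeff p i) * z ^ i) + (\<Sum>i\<le>?N. of_real (coeff q i) * z ^ i)"
    by (simp add: distrib_right sum.distrib)
  also have "\<dots> = cev p z + cev q z"
    using cev_ext[of p ?N z] cev_ext[of q ?N z] by simp
  finally show ?thesis .
qed

lemma cev_smult: "cev (smult c p) z = of_real c * cev p z"
proof -
  have "cev (smult c p) z = (\<Sum>i\<le>degree p. of_real (coeff (smult c p) i) * z ^ i)"
    by (rule cev_ext) simp
  thus ?thesis by (simp add: cev_def sum_distrib_left mult.assoc)
qed

lemma cev_pCons: "cev (pCons a p) z = of_real a + z * cev p z"
proof -
  have "cev (pCons a p) z = (\<Sum>i\<le>Suc (degree p). of_real (coeff (pCons a p) i) * z ^ i)"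
    by (rule cev_ext) (simp add: degree_pCons_le)
  also have "\<dots> = of_real a + (\<Sum>i\<le>degree p. of_real (coeff p i) * z ^ Suc i)"
    by (subst sum.atMost_Suc_shift) simp
  also have "\<dots> = of_real a + z * cev p z"
    by (simp add: cev_def sum_distrib_left algebra_simps)
  finally show ?thesis .
qed

lemma cev_0 [simp]: "cev 0 z = 0" by (simp add: cev_def)

lemma cev_mult: "cev (p * q) z = cev p z * cev q z"
proof (induction p rule: pCons_induct)
  case 0 thus ?case by simp
next
  case (pCons a p)
  have "cev (pCons a p * q) z = cev (smult a q + pCons 0 (p * q)) z" by simp
  also have "\<dots> = of_real a * cev q z + z * (cev p z * cev q z)"
    by (simp add: cev_add cev_smult cev_pCons pCons.IH)
  also have "\<dots> = cev (pCons a p) z * cev q z" by (simp add: cev_pCons algebra_simps)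
  finally show ?case .
qed

lemma cev_real: "cev p (of_real r) = of_real (poly p r)"
  by (simp add: cev_def poly_altdef)

lemma cev_map: "poly (map_poly complex_of_real p) z = cev p z"
  by (simp add: poly_altdef cev_def degree_map_poly coeff_map_poly)

lemma cev_root:
  assumes "degree p > 0"
  shows "\<exists>z. cev p z = 0"
proof -
  have "degree (map_poly complex_of_real p) = degree p" by (simp add: degree_map_poly)
  hence "\<not> constant (poly (map_poly complex_of_real p))" using assms by (simp add: constant_degree)
  then obtain z where "poly (map_poly complex_of_real p) z = 0" using fundamental_theorem_of_algebra by blast
  thus ?thesis by (auto simp: cev_map)
qed

lemma quad_dvd:
  fixes q :: "real poly" and a b :: real
  assumes b: "b \<noteq> 0" and z: "cev q (Complex a b) = 0"
  shows "[:a^2 + b^2, -2 * a, 1:] dvd q"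
proof -
  define Q where "Q = [:a^2 + b^2, -2 * a, 1:]"
  have Q0: "Q \<noteq> 0" by (simp add: Q_def)
  have dQ: "degree Q = 2" by (simp add: Q_def)
  define r where "r = q mod Q"
  have qe: "q = Q * (q div Q) + r" by (simp add: r_def)
  have cQ: "cev Q (Complex a b) = 0"
    by (simp add: Q_def cev_pCons complex_eq_iff power2_eq_square algebra_simps)
  have cr: "cev r (Complex a b) = 0"
    using z cQ qe by (metis cev_add cev_mult add_0 mult_zero_left)
  have dr: "degree r \<le> 1"
    using degree_mod_less[OF Q0, of q] dQ by (auto simp: r_def)
  have rr: "r = [:coeff r 0, coeff r 1:]"
    by (rule poly_eqI) (use dr in \<open>auto simp: coeff_pCons coeff_eq_0 split: nat.splits\<close>)
  have "cev [:coeff r 0, coeff r 1:] (Complex a b) = 0" using cr rr by simp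
  hence "of_real (coeff r 0) + Complex a b * of_real (coeff r 1) = 0" by (simp add: cev_pCons)
  hence "coeff r 1 = 0" "coeff r 0 = 0" using b by (auto simp: complex_eq_iff)
  hence "r = 0" using rr by simp
  thus ?thesis unfolding Q_def[symmetric] r_def by (simp add: mod_eq_0_iff_dvd)
qed

lemma poly_op_ext:
  assumes "degree p \<le> N"
  shows "poly_op p T x = (\<Sum>i\<le>N. coeff p i *\<^sub>R (T ^^ i) x)"
proof -
  have "(\<Sum>i\<le>N. coeff p i *\<^sub>R (T ^^ i) x) = (\<Sum>i\<le>degree p. coeff p i *\<^sub>R (T ^^ i) x)"
    by (rule sum.mono_neutral_right) (use assms in \<open>auto simp: coeff_eq_0\<close>)
  thus ?thesis by (simp add: poly_op_def)
qed

lemma poly_op_pCons: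
  assumes T: "clinear_op T"
  shows "poly_op (pCons a p) T x = a *\<^sub>R x + T (poly_op p T x)"
proof -
  have "poly_op (pCons a p) T x = (\<Sum>i\<le>Suc (degree p). coeff (pCons a p) i *\<^sub>R (T ^^ i) x)"
    by (rule poly_op_ext) (simp add: degree_pCons_le)
  also have "\<dots> = a *\<^sub>R x + (\<Sum>i\<le>degree p. coeff p i *\<^sub>R (T ^^ Suc i) x)"
    by (subst sum.atMost_Suc_shift) simp
  also have "(\<Sum>i\<le>degree p. coeff p i *\<^sub>R (T ^^ Suc i) x) = T (poly_op p T x)"
    by (simp add: poly_op_def clinear_sum[OF T] clinear_scaleR[OF T])
  finally show ?thesis .
qed

lemma poly_op_pCons_fun:
  "clinear_op T \<Longrightarrow> poly_op (pCons a p) T = (\<lambda>x. a *\<^sub>R x + T (poly_op p T x))"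
  by (rule ext) (rule poly_op_pCons)

lemma poly_op_0 [simp]: "poly_op 0 T x = 0"
  by (simp add: poly_op_def)

lemma poly_op_add: "poly_op (p + q) T x = poly_op p T x + poly_op q T x"
proof -
  let ?N = "max (degree p) (degree q)"
  have "poly_op (p + q) T x = (\<Sum>i\<le>?N. coeff (p + q) i *\<^sub>R (T ^^ i) x)"
    by (rule poly_op_ext) (rule degree_add_le_max)
  also have "\<dots> = (\<Sum>i\<le>?N. coeff p i *\<^sub>R (T ^^ i) x) + (\<Sum>i\<le>?N. coeff q i *\<^sub>R (T ^^ i) x)"
    by (simp add: scaleR_add_left sum.distrib)
  also have "\<dots> = poly_op p T x + poly_op q T x"
    using poly_op_ext[of p ?N T x] poly_op_ext[of q ?N T x] by simp
  finally show ?thesis .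
qed

lemma poly_op_smult: "poly_op (smult c p) T x = c *\<^sub>R poly_op p T x"
proof -
  have "poly_op (smult c p) T x = (\<Sum>i\<le>degree p. coeff (smult c p) i *\<^sub>R (T ^^ i) x)"
    by (rule poly_op_ext) simp
  thus ?thesis by (simp add: poly_op_def scaleR_sum_right)
qed

lemma poly_op_diff: "poly_op (p - q) T x = poly_op p T x - poly_op q T x"
proof -
  have "p - q = p + smult (-1) q" by simp
  thus ?thesis by (simp only: poly_op_add poly_op_smult) simp
qed

lemma poly_op_const: "poly_op [:c:] T x = c *\<^sub>R x"
  by (simp add: poly_op_def)

lemma poly_op_X: "clinear_op T \<Longrightarrow> poly_op [:0, 1:] T x = T x"
  by (simp add: poly_op_pCons poly_op_const)

lemma poly_op_linear: "clinear_op T \<Longrightarrow> poly_op [:b, a:] T x = a *\<^sub>R T x + b *\<^sub>R x"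
  by (simp add: poly_op_pCons poly_op_const clinear_scaleR)

lemma poly_op_mult:
  assumes T: "clinear_op T"
  shows "poly_op (p * q) T x = poly_op p T (poly_op q T x)"
proof (induction p arbitrary: x rule: pCons_induct)
  case 0 thus ?case by simp
next
  case (pCons a p)
  have "poly_op (pCons a p * q) T x = poly_op (smult a q + pCons 0 (p * q)) T x" by simp
  also have "\<dots> = a *\<^sub>R poly_op q T x + T (poly_op p T (poly_op q T x))"
    by (simp add: poly_op_add poly_op_smult poly_op_pCons[OF T] pCons.IH)
  also have "\<dots> = poly_op (pCons a p) T (poly_op q T x)" by (simp add: poly_op_pCons[OF T])
  finally show ?case .
qed

lemma poly_op_bounded:
  assumes T: "bounded_op T"
  shows "bounded_op (poly_op p T)"
proof (induction p rule: pCons_induct)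
  case 0
  have "poly_op 0 T = (\<lambda>x. 0)" by (rule ext) simp
  thus ?case using bounded_op_zero by simp
next
  case (pCons a p)
  show ?case unfolding poly_op_pCons_fun[OF bounded_op_clinear[OF T]]
    by (intro bounded_op_add bounded_op_scaleR bounded_op_id bounded_op_comp[OF T] pCons.IH)
qed

lemma poly_op_commute:
  assumes T: "clinear_op T"
  shows "poly_op p T (T x) = T (poly_op p T x)"
proof -
  have "poly_op (p * [:0, 1:]) T x = poly_op p T (T x)" by (simp only: poly_op_mult[OF T] poly_op_X[OF T])
  hence "poly_op p T (T x) = poly_op (p * [:0, 1:]) T x" by (rule sym)
  also have "\<dots> = poly_op ([:0, 1:] * p) T x" by (simp add: mult.commute)
  also have "\<dots> = T (poly_op p T x)" by (simp only: poly_op_mult[OF T] poly_op_X[OF T])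
  finally show ?thesis .
qed

lemma poly_op_herm:
  assumes T: "clinear_op T" "herm T"
  shows "herm (poly_op p T)"
proof (induction p rule: pCons_induct)
  case 0 thus ?case by (simp add: herm_def)
next
  case (pCons a p)
  show ?case unfolding herm_def poly_op_pCons[OF T(1)]
  proof (intro allI)
    fix x y
    have "cinner (T (poly_op p T x)) y = cinner (poly_op p T x) (T y)" using T(2) by (simp add: herm_def)
    also have "\<dots> = cinner x (poly_op p T (T y))" using pCons.IH by (simp add: herm_def)
    also have "\<dots> = cinner x (T (poly_op p T y))" by (simp add: poly_op_commute[OF T(1)])
    finally show "cinner (a *\<^sub>R x + T (poly_op p T x)) y = cinner x (a *\<^sub>R y + T (poly_op p T y))"
      by (simp add: cinner_add_left cinner_add_right cinner_scaleR_left cinner_scaleR_right)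
  qed
qed

lemma herm_of_le:
  assumes T: "bounded_op T" and le: "op_le (scal_op m) T"
  shows "herm T"
proof (rule herm_from_real[OF bounded_op_clinear[OF T]])
  fix x
  have "Im (cinner x (T x - scal_op m x)) = 0" using le by (simp add: op_le_def)
  thus "Im (cinner x (T x)) = 0" by (simp add: scal_op_def cinner_diff_right cinner_scaleR_right cinner_self_real)
qed

lemma herm_shift:
  assumes "herm T" shows "herm (\<lambda>x. T x - c *\<^sub>R x)"
  using assms by (simp add: herm_def cinner_diff_left cinner_diff_right cinner_scaleR_left cinner_scaleR_right)

lemma spec_point:
  fixes T :: "'a::chilbert_space \<Rightarrow> 'a"
  assumes T: "bounded_op T" "herm T"
    and lb: "\<And>x. c * (norm x)^2 \<le> Re (cinner x (T x))"
    and ap: "\<And>e. e > 0 \<Longrightarrow> \<exists>x. norm x = 1 \<and> Re (cinner x (T x)) < c + e"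
  shows "c \<in> op_spectrum T"
proof -
  define R where "R x = T x - c *\<^sub>R x" for x
  have Rb: "bounded_op R" unfolding R_def by (rule bounded_op_diff[OF T(1) bounded_op_scaleR[OF bounded_op_id]])
  have Rh: "herm R" unfolding R_def by (rule herm_shift[OF T(2)])
  have Rq: "Re (cinner x (R x)) = Re (cinner x (T x)) - c * (norm x)^2" for x
    by (simp add: R_def cinner_diff_right cinner_scaleR_right cinner_self_real)
  have Rp: "psd R" unfolding psd_def using herm_real[OF Rh] Rq lb by simp
  have "\<not> bij R"
  proof (rule not_bij_approx[OF Rb Rh Rp])
    fix e :: real assume "e > 0"
    then obtain x where "norm x = 1" "Re (cinner x (T x)) < c + e" using ap by blast
    thus "\<exists>x. norm x = 1 \<and> Re (cinner x (R x)) < e" using Rq by (intro exI[of _ x]) simp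
  qed
  thus ?thesis by (simp add: op_spectrum_def R_def[abs_def])
qed

lemma spec_inf:
  fixes T :: "'a::chilbert_space \<Rightarrow> 'a"
  assumes T: "bounded_op T" "herm T" and x0: "(x0::'a) \<noteq> 0"
  shows "\<exists>c\<in>op_spectrum T. \<forall>x. c * (norm x)^2 \<le> Re (cinner x (T x))"
proof -
  obtain K where K: "K > 0" "\<And>x. norm (T x) \<le> K * norm x" using bounded_op_bound[OF T(1)] by blast
  define V where "V = {Re (cinner x (T x)) | x. norm x = 1}"
  define c where "c = Inf V"
  have Vne: "V \<noteq> {}"
  proof -
    have "norm ((1 / norm x0) *\<^sub>R x0) = 1" using x0 by simp
    thus ?thesis unfolding V_def by blast
  qed
  have Vb: "-K \<le> v" if vV: "v \<in> V" for v
  proof -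
    obtain x where x: "norm x = 1" "v = Re (cinner x (T x))" using vV V_def by blast
    have "- Re (cinner x (T x)) \<le> cmod (cinner x (T x))" by (metis abs_Re_le_cmod abs_le_iff)
    also have "\<dots> \<le> norm x * norm (T x)" by (rule cinner_cauchy_schwarz)
    also have "\<dots> \<le> K" using K(2)[of x] x by simp
    finally show ?thesis using x by simp
  qed
  have bdd: "bdd_below V" using Vb by (auto simp: bdd_below_def)
  have lb1: "c \<le> Re (cinner x (T x))" if "norm x = 1" for x
    unfolding c_def using bdd that by (intro cInf_lower) (auto simp: V_def)
  have lb: "c * (norm x)^2 \<le> Re (cinner x (T x))" for x
  proof (cases "x = 0")
    case True thus ?thesis by (simp add: clinear_zero[OF bounded_op_clinear[OF T(1)]])
  next
    case False
    define u where "u = (1 / norm x) *\<^sub>R x"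
    have "norm u = 1" using False by (simp add: u_def)
    hence "c \<le> Re (cinner u (T u))" by (rule lb1)
    also have "Re (cinner u (T u)) = Re (cinner x (T x)) / (norm x)^2"
      by (simp add: u_def clinear_scaleR[OF bounded_op_clinear[OF T(1)]] cinner_scaleR_left
          cinner_scaleR_right power2_eq_square)
    finally show ?thesis using False by (simp add: field_simps)
  qed
  have ap: "\<exists>x. norm x = 1 \<and> Re (cinner x (T x)) < c + e" if "e > 0" for e
  proof -
    have "Inf V < c + e" using that by (simp add: c_def)
    then obtain v where "v \<in> V" "v < c + e" using cInf_lessD[OF Vne] by blast
    thus ?thesis unfolding V_def by blast
  qed
  have "c \<in> op_spectrum T" by (rule spec_point[OF T lb ap])
  thus ?thesis using lb by blast
qed

lemma spec_sub:
  fixes T :: "'a::chilbert_space \<Rightarrow> 'a"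
  assumes T: "bounded_op T" and le1: "op_le (scal_op m) T" and le2: "op_le T (scal_op M)"
  shows "op_spectrum T \<subseteq> {m..M}"
proof
  fix t assume t: "t \<in> op_spectrum T"
  have Th: "herm T" by (rule herm_of_le[OF T le1])
  have q1: "m * (norm x)^2 \<le> Re (cinner x (T x))" for x
    using le1 by (simp add: op_le_def scal_op_def cinner_diff_right cinner_scaleR_right cinner_self_real)
  have q2: "Re (cinner x (T x)) \<le> M * (norm x)^2" for x
    using le2 by (simp add: op_le_def scal_op_def cinner_diff_right cinner_scaleR_right cinner_self_real)
  have "\<not> t < m"
  proof
    assume tm: "t < m"
    have "bij (\<lambda>x. T x - t *\<^sub>R x)"
    proof (rule posdef_bij[where c="m - t"])
      show "bounded_op (\<lambda>x. T x - t *\<^sub>R x)" by (rule bounded_op_diff[OF T bounded_op_scaleR[OF bounded_op_id]])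
      show "herm (\<lambda>x. T x - t *\<^sub>R x)" by (rule herm_shift[OF Th])
      show "m - t > 0" using tm by simp
      show "(m - t) * (norm x)^2 \<le> Re (cinner x (T x - t *\<^sub>R x))" for x
        using q1[of x] by (simp add: cinner_diff_right cinner_scaleR_right cinner_self_real algebra_simps)
    qed
    thus False using t by (simp add: op_spectrum_def)
  qed
  moreover have "\<not> t > M"
  proof
    assume tM: "t > M"
    have "bij (\<lambda>x. - (T x - t *\<^sub>R x))"
    proof (rule posdef_bij[where c="t - M"])
      show "bounded_op (\<lambda>x. - (T x - t *\<^sub>R x))"
        using bounded_op_scaleR[OF bounded_op_diff[OF T bounded_op_scaleR[OF bounded_op_id]], of "-1" t] by simp
      show "herm (\<lambda>x. - (T x - t *\<^sub>R x))" using Th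
        by (simp add: herm_def cinner_diff_left cinner_diff_right cinner_scaleR_left cinner_scaleR_right
            cinner_minus_left cinner_minus_right)
      show "t - M > 0" using tM by simp
      show "(t - M) * (norm x)^2 \<le> Re (cinner x (- (T x - t *\<^sub>R x)))" for x
        using q2[of x] by (simp add: cinner_minus_right cinner_diff_right cinner_scaleR_right cinner_self_real algebra_simps)
    qed
    hence "bij (uminus \<circ> (\<lambda>x. - (T x - t *\<^sub>R x)))" by (intro bij_comp) (auto simp: bij_uminus)
    hence "bij (\<lambda>x. T x - t *\<^sub>R x)" by (simp add: o_def)
    thus False using t by (simp add: op_spectrum_def)
  qed
  ultimately show "t \<in> {m..M}" by simp
qed

lemma bij_scaleR:
  assumes "c \<noteq> 0" shows "bij (\<lambda>x::'a::real_vector. c *\<^sub>R x)"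
proof -
  have "inj (\<lambda>x::'a. c *\<^sub>R x)" using assms by (auto intro: injI)
  moreover have "surj (\<lambda>x::'a. c *\<^sub>R x)"
    unfolding surj_def using assms by (metis scaleR_scaleR right_inverse scaleR_one)
  ultimately show ?thesis by (simp add: bij_def)
qed

lemma spec_map:
  fixes T :: "'a::chilbert_space \<Rightarrow> 'a"
  assumes T: "bounded_op T" "herm T"
  shows "q \<noteq> 0 \<Longrightarrow> (\<forall>t\<in>op_spectrum T. poly q t \<noteq> 0) \<Longrightarrow> bij (poly_op q T)"
proof (induction "degree q" arbitrary: q rule: less_induct)
  case less
  have Tl: "clinear_op T" using T(1) by (rule bounded_op_clinear)
  show ?case
  proof (cases "degree q = 0")
    case True
    then obtain c where q: "q = [:c:]" by (metis degree_eq_zeroE)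
    have c: "c \<noteq> 0" using less.prems q by simp
    have "poly_op q T = (\<lambda>x. c *\<^sub>R x)" by (rule ext) (simp add: q poly_op_const)
    thus ?thesis using bij_scaleR[OF c] by simp
  next
    case False
    obtain z where z: "cev q z = 0" using cev_root False by auto
    show ?thesis
    proof (cases "Im z = 0")
      case True
      define r where "r = Re z"
      have zr: "z = of_real r" using True by (simp add: r_def complex_eq_iff)
      have pr: "poly q r = 0" using z cev_real[of q r] zr by simp
      then obtain d where qd: "q = [:-r, 1:] * d" using poly_eq_0_iff_dvd by (metis dvdE)
      have d0: "d \<noteq> 0" using less.prems qd by auto
      have "degree q = degree [:-r, 1:] + degree d" unfolding qd by (rule degree_mult_eq) (use d0 in auto)
      hence dd: "degree d < degree q" by simp
      have droots: "\<forall>t\<in>op_spectrum T. poly d t \<noteq> 0" using less.prems qd by auto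
      have bd: "bij (poly_op d T)" using less.hyps[OF dd d0 droots] .
      have "r \<notin> op_spectrum T" using less.prems pr by auto
      hence br: "bij (\<lambda>x. T x - r *\<^sub>R x)" by (simp add: op_spectrum_def)
      have "poly_op q T = (\<lambda>x. T x - r *\<^sub>R x) \<circ> poly_op d T"
        by (rule ext) (simp only: qd poly_op_mult[OF Tl] poly_op_linear[OF Tl] o_def, simp)
      thus ?thesis using bij_comp[OF bd br] by simp
    next
      case False
      define a where "a = Re z"
      define b where "b = Im z"
      have b0: "b \<noteq> 0" using False by (simp add: b_def)
      define Q where "Q = [:a^2 + b^2, -2 * a, 1:]"
      have "Q dvd q" unfolding Q_def by (rule quad_dvd[OF b0]) (use z in \<open>simp add: a_def b_def\<close>)
      then obtain d where qd: "q = Q * d" by (rule dvdE)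
      have d0: "d \<noteq> 0" using less.prems qd by auto
      have dQ: "degree Q = 2" by (simp add: Q_def)
      have "Q \<noteq> 0" by (simp add: Q_def)
      hence "degree q = degree Q + degree d" unfolding qd using d0 by (rule degree_mult_eq)
      hence dd: "degree d < degree q" using dQ by simp
      have droots: "\<forall>t\<in>op_spectrum T. poly d t \<noteq> 0" using less.prems qd by auto
      have bd: "bij (poly_op d T)" using less.hyps[OF dd d0 droots] .
      have Qx: "poly_op Q T x = (a^2 + b^2) *\<^sub>R x + (-2 * a) *\<^sub>R T x + T (T x)" for x
        by (simp add: Q_def poly_op_pCons[OF Tl] clinear_add[OF Tl] clinear_diff[OF Tl] clinear_scaleR[OF Tl] clinear_zero[OF Tl])
      have bQ: "bij (poly_op Q T)"
      proof (rule posdef_bij[where c="b^2"])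
        show "bounded_op (poly_op Q T)" by (rule poly_op_bounded[OF T(1)])
        show "herm (poly_op Q T)" by (rule poly_op_herm[OF Tl T(2)])
        show "b^2 > 0" using b0 by simp
        fix x
        have "cinner x (T (T x)) = cinner (T x) (T x)" using T(2) unfolding herm_def by metis
        hence tt: "cinner x (T (T x)) = of_real ((norm (T x))^2)" by (simp add: cinner_self_real)
        have "(norm (T x - a *\<^sub>R x))^2 = Re (cinner (T x - a *\<^sub>R x) (T x - a *\<^sub>R x))"
          by (simp add: cinner_self_real)
        also have "\<dots> = (norm (T x))^2 - 2 * a * Re (cinner x (T x)) + a^2 * (norm x)^2"
          using herm_re_swap[OF T(2), of x x]
          by (simp only: cinner_diff_left cinner_diff_right cinner_scaleR_left cinner_scaleR_right)
             (simp add: cinner_self_real power2_eq_square algebra_simps)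
        finally have e: "(norm (T x - a *\<^sub>R x))^2 = (norm (T x))^2 - 2 * a * Re (cinner x (T x)) + a^2 * (norm x)^2" .
        have "Re (cinner x (poly_op Q T x)) = (a^2 + b^2) * (norm x)^2 - 2 * a * Re (cinner x (T x)) + (norm (T x))^2"
          unfolding Qx by (simp add: cinner_add_right cinner_diff_right cinner_scaleR_right tt cinner_self_real)
        also have "\<dots> = (norm (T x - a *\<^sub>R x))^2 + b^2 * (norm x)^2" using e by (simp add: algebra_simps)
        finally show "b^2 * (norm x)^2 \<le> Re (cinner x (poly_op Q T x))" by simp
      qed
      have "poly_op q T = poly_op Q T \<circ> poly_op d T"
        by (rule ext) (simp add: qd poly_op_mult[OF Tl])
      thus ?thesis using bij_comp[OF bd bQ] by simp
    qed
  qed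
qed

lemma poly_pos:
  fixes T :: "'a::chilbert_space \<Rightarrow> 'a"
  assumes T: "bounded_op T" "herm T" and p: "\<And>t. t \<in> op_spectrum T \<Longrightarrow> 0 \<le> poly p t"
  shows "psd (poly_op p T)"
proof -
  have Tl: "clinear_op T" using T(1) by (rule bounded_op_clinear)
  define S where "S = poly_op p T"
  have Sb: "bounded_op S" unfolding S_def by (rule poly_op_bounded[OF T(1)])
  have Sh: "herm S" unfolding S_def by (rule poly_op_herm[OF Tl T(2)])
  have "0 \<le> Re (cinner x (S x))" for x
  proof (rule ccontr)
    assume neg: "\<not> 0 \<le> Re (cinner x (S x))"
    hence x0: "x \<noteq> 0" by auto
    obtain c where c: "c \<in> op_spectrum S" "\<And>y. c * (norm y)^2 \<le> Re (cinner y (S y))"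
      using spec_inf[OF Sb Sh x0] by blast
    have "c * (norm x)^2 < 0" using c(2)[of x] neg by simp
    hence cneg: "c < 0" using x0 by (simp add: mult_less_0_iff)
    have nb: "\<not> bij (poly_op (p - [:c:]) T)"
    proof -
      have "poly_op (p - [:c:]) T = (\<lambda>x. S x - c *\<^sub>R x)"
        by (rule ext) (simp add: S_def poly_op_diff poly_op_const)
      thus ?thesis using c(1) by (simp add: op_spectrum_def)
    qed
    show False
    proof (cases "p - [:c:] = 0")
      case True
      obtain t where "t \<in> op_spectrum T" using spec_inf[OF T x0] by blast
      moreover have "p = [:c:]" using True by simp
      hence "poly p t = c" by simp
      ultimately show False using p cneg by fastforce
    next
      case False
      have "\<not> (\<forall>t\<in>op_spectrum T. poly (p - [:c:]) t \<noteq> 0)" using spec_map[OF T False] nb by blast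
      then obtain t where "t \<in> op_spectrum T" "poly p t = c" by auto
      thus False using p cneg by fastforce
    qed
  qed
  thus ?thesis using herm_real[OF Sh] by (simp add: psd_def S_def)
qed

lemma poly_norm_bound:
  fixes T :: "'a::chilbert_space \<Rightarrow> 'a"
  assumes T: "bounded_op T" "herm T" and p: "\<And>t. t \<in> op_spectrum T \<Longrightarrow> \<bar>poly p t\<bar> \<le> s"
  shows "norm (poly_op p T x) \<le> s * norm x"
proof -
  have Tl: "clinear_op T" using T(1) by (rule bounded_op_clinear)
  have p1: "psd (poly_op ([:s:] - p) T)" by (rule poly_pos[OF T]) (use p in \<open>force simp: abs_le_iff\<close>)
  have p2: "psd (poly_op ([:s:] + p) T)" by (rule poly_pos[OF T]) (use p in \<open>force simp: abs_le_iff\<close>)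
  have "\<bar>Re (cinner y (poly_op p T y))\<bar> \<le> s * (norm y)^2" for y
  proof -
    have "0 \<le> Re (cinner y (poly_op ([:s:] - p) T y))" using p1 by (simp add: psd_def)
    moreover have "0 \<le> Re (cinner y (poly_op ([:s:] + p) T y))" using p2 by (simp add: psd_def)
    ultimately show ?thesis
      by (simp add: poly_op_diff poly_op_add poly_op_const cinner_diff_right cinner_add_right
          cinner_scaleR_right cinner_self_real abs_le_iff)
  qed
  thus ?thesis by (rule qf_norm_bound[OF bounded_op_clinear[OF poly_op_bounded[OF T(1)]] poly_op_herm[OF Tl T(2)]])
qed

lemma rpf_poly:
  fixes g :: "real \<Rightarrow> real"
  assumes "real_polynomial_function g"
  shows "\<exists>p. \<forall>x. g x = poly p x"
  using assms
proof (induction g rule: real_polynomial_function.induct)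
  case (linear f)
  have "f x = poly [:0, f 1:] x" for x
  proof -
    have "f x = f (x *\<^sub>R 1)" by simp
    also have "\<dots> = x *\<^sub>R f 1" by (rule linear_simps(5)[OF linear.hyps])
    finally show ?thesis by simp
  qed
  thus ?case by blast
next
  case (const c)
  have "\<forall>x. c = poly [:c:] x" by simp
  thus ?case by blast
next
  case (add f g)
  then obtain p q where "\<forall>x. f x = poly p x" "\<forall>x. g x = poly q x" by blast
  hence "\<forall>x. f x + g x = poly (p + q) x" by simp
  thus ?case by blast
next
  case (mult f g)
  then obtain p q where "\<forall>x. f x = poly p x" "\<forall>x. g x = poly q x" by blast
  hence "\<forall>x. f x * g x = poly (p * q) x" by simp
  thus ?case by blast
qed

lemma weier:
  fixes g :: "real \<Rightarrow> real" and m M :: real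
  assumes g: "continuous_on {m..M} g" and e: "e > 0"
  shows "\<exists>p. \<forall>t\<in>{m..M}. \<bar>poly p t - g t\<bar> < e"
proof -
  obtain h where h: "real_polynomial_function h" "\<And>x. x \<in> {m..M} \<Longrightarrow> \<bar>g x - h x\<bar> < e"
    using Stone_Weierstrass_real_polynomial_function[OF compact_Icc g e] by blast
  obtain p where "\<forall>x. h x = poly p x" using rpf_poly[OF h(1)] by blast
  thus ?thesis using h(2) by (metis abs_minus_commute)
qed

lemma approx_seq:
  fixes g :: "real \<Rightarrow> real" and m M :: real
  assumes g: "continuous_on {m..M} g"
  shows "\<exists>Q. \<forall>n. \<forall>t\<in>{m..M}. \<bar>poly (Q n) t - g t\<bar> < 1 / Suc n"
proof -
  have "\<forall>n. \<exists>p. \<forall>t\<in>{m..M}. \<bar>poly p t - g t\<bar> < 1 / Suc n"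
    using weier[OF g] by simp
  thus ?thesis by metis
qed

lemma onorm_pointwise:
  assumes F: "\<And>n. bounded_op (F n)" and B: "bounded_op B"
    and o: "(\<lambda>n. onorm (\<lambda>x. F n x - B x)) \<longlonglongrightarrow> 0"
  shows "(\<lambda>n. F n x) \<longlonglongrightarrow> B x"
proof -
  have "(\<lambda>n. F n x - B x) \<longlonglongrightarrow> 0"
  proof (rule Lim_null_comparison)
    show "\<forall>\<^sub>F n in sequentially. norm (F n x - B x) \<le> onorm (\<lambda>x. F n x - B x) * norm x"
      by (intro always_eventually allI onorm bounded_op_bounded_linear bounded_op_diff F B)
    show "(\<lambda>n. onorm (\<lambda>x. F n x - B x) * norm x) \<longlonglongrightarrow> 0"
      using tendsto_mult_left_zero[OF o] by simp
  qed
  thus ?thesis by (simp add: LIM_zero_iff)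
qed

lemma cscale_tendsto:
  "(X \<longlongrightarrow> L) F \<Longrightarrow> ((\<lambda>n. cscale c (X n :: 'a::complex_inner)) \<longlongrightarrow> cscale c L) F"
  by (rule bounded_linear.tendsto[OF bounded_op_bounded_linear[OF bounded_op_cscale_id]])

definition cfc_pred :: "('a::complex_inner \<Rightarrow> 'a) \<Rightarrow> (real \<Rightarrow> real) \<Rightarrow> ('a \<Rightarrow> 'a) \<Rightarrow> bool" where
  "cfc_pred T f B \<longleftrightarrow> bounded_op B \<and>
     (\<forall>P :: nat \<Rightarrow> real poly.
        (\<forall>e>0. \<exists>N. \<forall>n\<ge>N. \<forall>t\<in>op_spectrum T. \<bar>poly (P n) t - f t\<bar> < e) \<longrightarrow>
        ((\<lambda>n. onorm (\<lambda>x. poly_op (P n) T x - B x)) \<longlonglongrightarrow> 0))"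

lemma cfc_eq: "cfc T f = (THE B. cfc_pred T f B)"
  by (simp add: cfc_def cfc_pred_def)

lemma cfc_main:
  fixes T :: "'a::chilbert_space \<Rightarrow> 'a"
  assumes T: "bounded_op T" "herm T" and sp: "op_spectrum T \<subseteq> {m..M}"
    and g: "continuous_on {m..M} g"
  shows "cfc_pred T g (cfc T g)"
proof -
  have Tl: "clinear_op T" using T(1) by (rule bounded_op_clinear)
  obtain Q where Q: "\<And>n t. t \<in> {m..M} \<Longrightarrow> \<bar>poly (Q n) t - g t\<bar> < 1 / Suc n"
    using approx_seq[OF g] by blast
  have est: "norm (poly_op p T x) \<le> s * norm x" if "\<And>t. t \<in> op_spectrum T \<Longrightarrow> \<bar>poly p t\<bar> \<le> s" for p s x
    by (rule poly_norm_bound[OF T that])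
  have Qd: "norm (poly_op (Q n) T x - poly_op (Q k) T x) \<le> (1 / Suc n + 1 / Suc k) * norm x" for n k x
  proof -
    have "norm (poly_op (Q n - Q k) T x) \<le> (1 / Suc n + 1 / Suc k) * norm x"
    proof (rule est)
      fix t assume "t \<in> op_spectrum T"
      hence "t \<in> {m..M}" using sp by blast
      hence "\<bar>poly (Q n) t - g t\<bar> < 1 / Suc n" "\<bar>poly (Q k) t - g t\<bar> < 1 / Suc k" using Q by auto
      thus "\<bar>poly (Q n - Q k) t\<bar> \<le> 1 / Suc n + 1 / Suc k" by simp
    qed
    thus ?thesis by (simp add: poly_op_diff)
  qed
  have cau: "Cauchy (\<lambda>n. poly_op (Q n) T x)" for x
  proof (rule CauchyI)
    fix e :: real assume e: "e > 0"
    obtain N :: nat where N: "2 * (norm x + 1) / e < N" using reals_Archimedean2 by blast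
    have "0 < 2 * (norm x + 1) / e" using e by (simp add: add_nonneg_pos)
    hence "real N > 0" using N by linarith
    hence Npos: "N > 0" by simp
    show "\<exists>N. \<forall>n\<ge>N. \<forall>k\<ge>N. norm (poly_op (Q n) T x - poly_op (Q k) T x) < e"
    proof (intro exI allI impI)
      fix n k assume nk: "N \<le> n" "N \<le> k"
      have "1 / real (Suc n) \<le> 1 / N" using nk Npos by (simp add: frac_le)
      moreover have "1 / real (Suc k) \<le> 1 / N" using nk Npos by (simp add: frac_le)
      ultimately have "(1 / Suc n + 1 / Suc k) * norm x \<le> (2 / N) * norm x"
        by (intro mult_right_mono) auto
      also have "\<dots> \<le> (2 / N) * (norm x + 1)" using Npos by (intro mult_left_mono) auto
      also have "\<dots> < e" using N e Npos by (simp add: field_simps)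
      finally show "norm (poly_op (Q n) T x - poly_op (Q k) T x) < e" using Qd[of n x k] by linarith
    qed
  qed
  define B where "B x = lim (\<lambda>n. poly_op (Q n) T x)" for x
  have Blim: "(\<lambda>n. poly_op (Q n) T x) \<longlonglongrightarrow> B x" for x
    unfolding B_def using cau[of x] by (simp add: Cauchy_convergent_iff convergent_LIMSEQ_iff)
  have Bd: "norm (poly_op (Q n) T x - B x) \<le> (1 / Suc n) * norm x" for n x
  proof (rule tendsto_le[OF trivial_limit_sequentially])
    show "(\<lambda>k. (1 / Suc n + 1 / Suc k) * norm x) \<longlonglongrightarrow> (1 / Suc n) * norm x"
    proof -
      have "(\<lambda>k. 1 / real (Suc k)) \<longlonglongrightarrow> 0" using LIMSEQ_inverse_real_of_nat by (simp add: inverse_eq_divide)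
      hence "(\<lambda>k. 1 / real (Suc n) + 1 / real (Suc k)) \<longlonglongrightarrow> 1 / real (Suc n) + 0"
        by (intro tendsto_add tendsto_const)
      thus ?thesis by (intro tendsto_mult_right) simp
    qed
    show "(\<lambda>k. norm (poly_op (Q n) T x - poly_op (Q k) T x)) \<longlonglongrightarrow> norm (poly_op (Q n) T x - B x)"
      by (intro tendsto_intros Blim)
    show "\<forall>\<^sub>F k in sequentially. norm (poly_op (Q n) T x - poly_op (Q k) T x) \<le> (1 / Suc n + 1 / Suc k) * norm x"
      using Qd by simp
  qed
  have Qb: "bounded_op (poly_op (Q n) T)" for n by (rule poly_op_bounded[OF T(1)])
  have Bl: "clinear_op B"
  proof -
    have "B (x + y) = B x + B y" for x y
    proof -
      have "(\<lambda>n. poly_op (Q n) T (x + y)) \<longlonglongrightarrow> B x + B y"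
        using tendsto_add[OF Blim[of x] Blim[of y]] by (simp add: clinear_add[OF bounded_op_clinear[OF Qb]])
      thus ?thesis using Blim[of "x + y"] LIMSEQ_unique by blast
    qed
    moreover have "B (cscale c x) = cscale c (B x)" for c x
    proof -
      have "(\<lambda>n. poly_op (Q n) T (cscale c x)) \<longlonglongrightarrow> cscale c (B x)"
        using cscale_tendsto[OF Blim[of x], of c] by (simp add: clinear_cscale[OF bounded_op_clinear[OF Qb]])
      thus ?thesis using Blim[of "cscale c x"] LIMSEQ_unique by blast
    qed
    ultimately show ?thesis by (simp add: clinear_op_def)
  qed
  have Bb: "bounded_op B"
  proof -
    obtain K where K: "\<And>x. norm (poly_op (Q 0) T x) \<le> K * norm x" using Qb[of 0] by (auto simp: bounded_op_def)
    have "norm (B x) \<le> (K + 1) * norm x" for x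
    proof -
      have t: "norm (B x) \<le> norm (poly_op (Q 0) T x) + norm (B x - poly_op (Q 0) T x)"
        by (rule norm_triangle_sub)
      have "norm (B x) \<le> norm (poly_op (Q 0) T x) + norm (poly_op (Q 0) T x - B x)"
        using t by (simp add: norm_minus_commute)
      also have "\<dots> \<le> K * norm x + 1 * norm x" using K[of x] Bd[of 0 x] by simp
      finally show ?thesis by (simp add: distrib_right)
    qed
    thus ?thesis using Bl by (auto simp: bounded_op_def)
  qed
  have Bconv: "(\<lambda>n. onorm (\<lambda>x. poly_op (P n) T x - B x)) \<longlonglongrightarrow> 0"
    if P: "\<forall>e>0. \<exists>N. \<forall>n\<ge>N. \<forall>t\<in>op_spectrum T. \<bar>poly (P n) t - g t\<bar> < e" for P
  proof (rule LIMSEQ_I)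
    fix e :: real assume e: "e > 0"
    obtain N1 where N1: "\<And>n t. n \<ge> N1 \<Longrightarrow> t \<in> op_spectrum T \<Longrightarrow> \<bar>poly (P n) t - g t\<bar> < e / 4"
      using P e by (meson zero_less_divide_iff zero_less_numeral)
    obtain N2 :: nat where N2: "4 / e < N2" using reals_Archimedean2 by blast
    have "0 < 4 / e" using e by simp
    hence "real N2 > 0" using N2 by linarith
    hence N2p: "N2 > 0" by simp
    show "\<exists>N. \<forall>n\<ge>N. norm (onorm (\<lambda>x. poly_op (P n) T x - B x) - 0) < e"
    proof (intro exI allI impI)
      fix n assume n: "max N1 N2 \<le> n"
      have inv: "1 / real (Suc n) < e / 4"
      proof -
        have "1 / real (Suc n) \<le> 1 / N2" using n N2p by (simp add: frac_le)
        also have "\<dots> < e / 4" using N2 N2p e by (simp add: field_simps)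
        finally show ?thesis .
      qed
      have b: "norm (poly_op (P n) T x - B x) \<le> (3 * e / 4) * norm x" for x
      proof -
        have "norm (poly_op (P n - Q n) T x) \<le> (e / 4 + 1 / Suc n) * norm x"
        proof (rule est)
          fix t assume t: "t \<in> op_spectrum T"
          hence "t \<in> {m..M}" using sp by blast
          hence "\<bar>poly (Q n) t - g t\<bar> < 1 / Suc n" using Q by auto
          moreover have "\<bar>poly (P n) t - g t\<bar> < e / 4" using N1 n t by auto
          ultimately show "\<bar>poly (P n - Q n) t\<bar> \<le> e / 4 + 1 / Suc n" by (simp only: poly_diff)
        qed
        hence "norm (poly_op (P n) T x - poly_op (Q n) T x) \<le> (e / 4 + 1 / Suc n) * norm x"
          by (simp add: poly_op_diff)
        moreover have "norm (poly_op (Q n) T x - B x) \<le> (1 / Suc n) * norm x" by (rule Bd)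
        moreover have "norm (poly_op (P n) T x - B x) \<le> norm (poly_op (P n) T x - poly_op (Q n) T x) + norm (poly_op (Q n) T x - B x)"
        proof -
          have "poly_op (P n) T x - B x = (poly_op (P n) T x - poly_op (Q n) T x) + (poly_op (Q n) T x - B x)" by simp
          thus ?thesis by (metis norm_triangle_ineq)
        qed
        ultimately have "norm (poly_op (P n) T x - B x) \<le> (e / 4 + 1 / Suc n) * norm x + (1 / Suc n) * norm x"
          by linarith
        also have "\<dots> \<le> (3 * e / 4) * norm x"
        proof -
          have "e / 4 + 1 / Suc n + 1 / Suc n \<le> 3 * e / 4" using inv by simp
          hence "(e / 4 + 1 / Suc n + 1 / Suc n) * norm x \<le> (3 * e / 4) * norm x" by (rule mult_right_mono) simp
          thus ?thesis by (simp add: distrib_right)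
        qed
        finally show ?thesis .
      qed
      have "onorm (\<lambda>x. poly_op (P n) T x - B x) \<le> 3 * e / 4" by (rule onorm_bound) (use e b in auto)
      moreover have "0 \<le> onorm (\<lambda>x. poly_op (P n) T x - B x)"
        by (intro onorm_pos_le bounded_op_bounded_linear bounded_op_diff poly_op_bounded[OF T(1)] Bb)
      ultimately show "norm (onorm (\<lambda>x. poly_op (P n) T x - B x) - 0) < e" using e by simp
    qed
  qed
  have predB: "cfc_pred T g B" using Bb Bconv by (simp add: cfc_pred_def)
  have uniq: "B' = B" if "cfc_pred T g B'" for B'
  proof -
    have B'b: "bounded_op B'" using that by (simp add: cfc_pred_def)
    have "\<forall>e>0. \<exists>N. \<forall>n\<ge>N. \<forall>t\<in>op_spectrum T. \<bar>poly (Q n) t - g t\<bar> < e"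
    proof (intro allI impI)
      fix e :: real assume e: "e > 0"
      obtain N :: nat where N: "1 / e < N" using reals_Archimedean2 by blast
      have "0 < 1 / e" using e by simp
      hence "real N > 0" using N by linarith
      hence Np: "N > 0" by simp
      show "\<exists>N. \<forall>n\<ge>N. \<forall>t\<in>op_spectrum T. \<bar>poly (Q n) t - g t\<bar> < e"
      proof (intro exI[of _ N] allI impI ballI)
        fix n t assume n: "N \<le> n" and t: "t \<in> op_spectrum T"
        have "\<bar>poly (Q n) t - g t\<bar> < 1 / Suc n" using Q t sp by blast
        also have "\<dots> \<le> 1 / N" using n Np by (simp add: frac_le)
        also have "\<dots> < e" using N Np e by (simp add: field_simps)
        finally show "\<bar>poly (Q n) t - g t\<bar> < e" .
      qed
    qed
    hence "(\<lambda>n. onorm (\<lambda>x. poly_op (Q n) T x - B' x)) \<longlonglongrightarrow> 0" using that by (simp add: cfc_pred_def)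
    hence "(\<lambda>n. poly_op (Q n) T x) \<longlonglongrightarrow> B' x" for x by (rule onorm_pointwise[OF Qb B'b])
    thus ?thesis using Blim LIMSEQ_unique by (metis ext)
  qed
  have "cfc T g = B" unfolding cfc_eq using predB uniq by (rule the_equality)
  thus ?thesis using predB by simp
qed

definition good :: "('a::chilbert_space \<Rightarrow> 'a) \<Rightarrow> real \<Rightarrow> real \<Rightarrow> bool" where
  "good T m M \<longleftrightarrow> bounded_op T \<and> herm T \<and> op_spectrum T \<subseteq> {m..M}"

lemma good_of:
  assumes "bounded_op T" "op_le (scal_op m) T" "op_le T (scal_op M)"
  shows "good T m M"
  by (simp add: good_def herm_of_le[OF assms(1,2)] spec_sub[OF assms] assms(1))

lemma unif_of_seq:
  assumes c: "c \<ge> 0" and P: "\<And>n t. t \<in> S \<Longrightarrow> \<bar>poly (P n) t - g t\<bar> \<le> c / Suc n"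
  shows "\<forall>e>0. \<exists>N. \<forall>n\<ge>N. \<forall>t\<in>S. \<bar>poly (P n) t - g t\<bar> < e"
proof (intro allI impI)
  fix e :: real assume e: "e > 0"
  obtain N :: nat where N: "c / e < N" using reals_Archimedean2 by blast
  have "0 \<le> c / e" using c e by simp
  hence "real N > 0" using N by linarith
  hence Np: "N > 0" by simp
  show "\<exists>N. \<forall>n\<ge>N. \<forall>t\<in>S. \<bar>poly (P n) t - g t\<bar> < e"
  proof (intro exI[of _ N] allI impI ballI)
    fix n t assume n: "N \<le> n" and t: "t \<in> S"
    have "\<bar>poly (P n) t - g t\<bar> \<le> c / Suc n" using P t by blast
    also have "\<dots> \<le> c / N" using n Np c by (intro divide_left_mono) auto
    also have "\<dots> < e" using N Np e by (simp add: field_simps)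
    finally show "\<bar>poly (P n) t - g t\<bar> < e" .
  qed
qed

context
  fixes T :: "'a::chilbert_space \<Rightarrow> 'a" and m M :: real
  assumes gd: "good T m M"
begin

lemma gT: "bounded_op T" "herm T" "op_spectrum T \<subseteq> {m..M}"
  using gd by (auto simp: good_def)

lemma cfc_bounded: "continuous_on {m..M} g \<Longrightarrow> bounded_op (cfc T g)"
  using cfc_main[OF gT, of g] by (simp add: cfc_pred_def)

lemma cfc_conv:
  assumes g: "continuous_on {m..M} g"
    and P: "\<forall>e>0. \<exists>N. \<forall>n\<ge>N. \<forall>t\<in>{m..M}. \<bar>poly (P n) t - g t\<bar> < e"
  shows "(\<lambda>n. poly_op (P n) T x) \<longlonglongrightarrow> cfc T g x"
proof -
  have P': "\<forall>e>0. \<exists>N. \<forall>n\<ge>N. \<forall>t\<in>op_spectrum T. \<bar>poly (P n) t - g t\<bar> < e"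
    using P gT(3) by (meson subsetD)
  have "(\<lambda>n. onorm (\<lambda>x. poly_op (P n) T x - cfc T g x)) \<longlonglongrightarrow> 0"
    using cfc_main[OF gT g] P' by (simp add: cfc_pred_def)
  thus ?thesis by (rule onorm_pointwise[OF poly_op_bounded[OF gT(1)] cfc_bounded[OF g]])
qed

lemma cfc_seq:
  assumes g: "continuous_on {m..M} g"
  obtains Q where "\<And>n t. t \<in> {m..M} \<Longrightarrow> \<bar>poly (Q n) t - g t\<bar> \<le> 1 / Suc n"
    "\<And>x. (\<lambda>n. poly_op (Q n) T x) \<longlonglongrightarrow> cfc T g x"
proof -
  obtain Q where Q: "\<And>n t. t \<in> {m..M} \<Longrightarrow> \<bar>poly (Q n) t - g t\<bar> < 1 / Suc n"
    using approx_seq[OF g] by blast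
  hence Q': "\<And>n t. t \<in> {m..M} \<Longrightarrow> \<bar>poly (Q n) t - g t\<bar> \<le> 1 / Suc n" by (simp add: less_imp_le)
  show ?thesis by (rule that[OF Q' cfc_conv[OF g unif_of_seq[OF zero_le_one Q']]])
qed

lemma cfc_add:
  assumes g: "continuous_on {m..M} g" and h: "continuous_on {m..M} h"
  shows "cfc T (\<lambda>t. g t + h t) x = cfc T g x + cfc T h x"
proof -
  obtain Q where Q: "\<And>n t. t \<in> {m..M} \<Longrightarrow> \<bar>poly (Q n) t - g t\<bar> \<le> 1 / Suc n"
    "\<And>x. (\<lambda>n. poly_op (Q n) T x) \<longlonglongrightarrow> cfc T g x" using cfc_seq[OF g] by blast
  obtain R where R: "\<And>n t. t \<in> {m..M} \<Longrightarrow> \<bar>poly (R n) t - h t\<bar> \<le> 1 / Suc n"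
    "\<And>x. (\<lambda>n. poly_op (R n) T x) \<longlonglongrightarrow> cfc T h x" using cfc_seq[OF h] by blast
  have gh: "continuous_on {m..M} (\<lambda>t. g t + h t)" using g h by (intro continuous_intros)
  have "\<bar>poly (Q n + R n) t - (g t + h t)\<bar> \<le> 2 / Suc n" if "t \<in> {m..M}" for n t
    using Q(1)[OF that, of n] R(1)[OF that, of n] by simp
  hence "(\<lambda>n. poly_op (Q n + R n) T x) \<longlonglongrightarrow> cfc T (\<lambda>t. g t + h t) x"
    by (intro cfc_conv[OF gh] unif_of_seq[of 2]) auto
  moreover have "(\<lambda>n. poly_op (Q n + R n) T x) \<longlonglongrightarrow> cfc T g x + cfc T h x"
    unfolding poly_op_add by (intro tendsto_add Q(2) R(2))
  ultimately show ?thesis using LIMSEQ_unique by blast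
qed

lemma cfc_smult:
  assumes g: "continuous_on {m..M} g"
  shows "cfc T (\<lambda>t. c * g t) x = c *\<^sub>R cfc T g x"
proof -
  obtain Q where Q: "\<And>n t. t \<in> {m..M} \<Longrightarrow> \<bar>poly (Q n) t - g t\<bar> \<le> 1 / Suc n"
    "\<And>x. (\<lambda>n. poly_op (Q n) T x) \<longlonglongrightarrow> cfc T g x" using cfc_seq[OF g] by blast
  have cg: "continuous_on {m..M} (\<lambda>t. c * g t)" using g by (intro continuous_intros)
  have "\<bar>poly (smult c (Q n)) t - c * g t\<bar> \<le> \<bar>c\<bar> / Suc n" if "t \<in> {m..M}" for n t
  proof -
    have "poly (smult c (Q n)) t - c * g t = c * (poly (Q n) t - g t)"
      by (simp add: right_diff_distrib)
    hence "\<bar>poly (smult c (Q n)) t - c * g t\<bar> = \<bar>c\<bar> * \<bar>poly (Q n) t - g t\<bar>"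
      by (simp only: abs_mult)
    also have "\<dots> \<le> \<bar>c\<bar> * (1 / Suc n)" using Q(1)[OF that, of n] by (intro mult_left_mono) auto
    finally show ?thesis by simp
  qed
  hence "(\<lambda>n. poly_op (smult c (Q n)) T x) \<longlonglongrightarrow> cfc T (\<lambda>t. c * g t) x"
    by (intro cfc_conv[OF cg] unif_of_seq[of "\<bar>c\<bar>"]) auto
  moreover have "(\<lambda>n. poly_op (smult c (Q n)) T x) \<longlonglongrightarrow> c *\<^sub>R cfc T g x"
    unfolding poly_op_smult by (intro tendsto_scaleR tendsto_const Q(2))
  ultimately show ?thesis using LIMSEQ_unique by blast
qed

lemma cfc_poly: "cfc T (\<lambda>t. poly p t) x = poly_op p T x"
proof -
  have c: "continuous_on {m..M} (\<lambda>t. poly p t)" by (intro continuous_intros)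
  have "(\<lambda>n. poly_op ((\<lambda>n. p) n) T x) \<longlonglongrightarrow> cfc T (\<lambda>t. poly p t) x"
    by (intro cfc_conv[OF c] unif_of_seq[of 0]) auto
  thus ?thesis by (intro LIMSEQ_unique[OF _ tendsto_const]) simp
qed

lemma cfc_affine: "cfc T (\<lambda>t. a * t + b) x = a *\<^sub>R T x + b *\<^sub>R x"
proof -
  have "(\<lambda>t. a * t + b) = (\<lambda>t. poly [:b, a:] t)" by (rule ext) (simp add: algebra_simps)
  thus ?thesis using cfc_poly[of "[:b, a:]" x] poly_op_linear[OF bounded_op_clinear[OF gT(1)]] by simp
qed

lemma cfc_psd:
  assumes g: "continuous_on {m..M} g" and pos: "\<And>t. t \<in> {m..M} \<Longrightarrow> 0 \<le> g t"
  shows "psd (cfc T g)"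
proof -
  obtain Q where Q: "\<And>n t. t \<in> {m..M} \<Longrightarrow> \<bar>poly (Q n) t - g t\<bar> \<le> 1 / Suc n"
    "\<And>x. (\<lambda>n. poly_op (Q n) T x) \<longlonglongrightarrow> cfc T g x" using cfc_seq[OF g] by blast
  define P where "P n = Q n + [:1 / Suc n:]" for n
  have "\<bar>poly (P n) t - g t\<bar> \<le> 2 / Suc n" if "t \<in> {m..M}" for n t
    using Q(1)[OF that, of n] by (simp add: P_def)
  hence conv: "(\<lambda>n. poly_op (P n) T x) \<longlonglongrightarrow> cfc T g x" for x
    by (intro cfc_conv[OF g] unif_of_seq[of 2]) auto
  have Ppos: "psd (poly_op (P n) T)" for n
  proof (rule poly_pos[OF gT(1,2)])
    fix t assume "t \<in> op_spectrum T"
    hence t: "t \<in> {m..M}" using gT(3) by blast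
    have "\<bar>poly (Q n) t - g t\<bar> \<le> 1 / Suc n" "0 \<le> g t" using Q(1)[OF t, of n] pos[OF t] by auto
    hence "0 \<le> poly (Q n) t + 1 / Suc n" by (simp only: abs_le_iff) linarith
    thus "0 \<le> poly (P n) t" by (simp add: P_def)
  qed
  show ?thesis unfolding psd_def
  proof (intro allI conjI)
    fix x
    have lim: "(\<lambda>n. cinner x (poly_op (P n) T x)) \<longlonglongrightarrow> cinner x (cfc T g x)"
      by (rule bounded_linear.tendsto[OF cinner_bounded_linear conv])
    have "(\<lambda>n. Im (cinner x (poly_op (P n) T x))) \<longlonglongrightarrow> Im (cinner x (cfc T g x))"
      by (rule tendsto_Im[OF lim])
    moreover have "Im (cinner x (poly_op (P n) T x)) = 0" for n
      using Ppos[of n] by (simp add: psd_def)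
    ultimately have "(\<lambda>n. 0) \<longlonglongrightarrow> Im (cinner x (cfc T g x))" by simp
    thus "Im (cinner x (cfc T g x)) = 0" by (simp add: LIMSEQ_const_iff)
    have "(\<lambda>n. Re (cinner x (poly_op (P n) T x))) \<longlonglongrightarrow> Re (cinner x (cfc T g x))"
      by (rule tendsto_Re[OF lim])
    moreover have "\<exists>N. \<forall>n\<ge>N. 0 \<le> Re (cinner x (poly_op (P n) T x))"
    proof (intro exI[of _ 0] allI impI)
      fix n :: nat show "0 \<le> Re (cinner x (poly_op (P n) T x))" using Ppos[of n] by (simp add: psd_def)
    qed
    ultimately show "0 \<le> Re (cinner x (cfc T g x))" by (rule LIMSEQ_le_const)
  qed
qed

lemma cfc_le:
  assumes g: "continuous_on {m..M} g" and h: "continuous_on {m..M} h"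
    and le: "\<And>t. t \<in> {m..M} \<Longrightarrow> g t \<le> h t"
  shows "op_le (cfc T g) (cfc T h)"
proof -
  have mg: "continuous_on {m..M} (\<lambda>t. (-1) * g t)" using g by (intro continuous_intros)
  have p: "psd (cfc T (\<lambda>t. h t + (-1) * g t))"
    by (rule cfc_psd) (use g h le in \<open>auto intro!: continuous_intros\<close>)
  have e: "cfc T (\<lambda>t. h t + (-1) * g t) = (\<lambda>x. cfc T h x - cfc T g x)"
    by (rule ext) (simp only: cfc_add[OF h mg] cfc_smult[OF g], simp)
  show ?thesis unfolding op_le_psd e[symmetric] by (rule p)
qed

end

lemma chord_eq:
  fixes a b m M t :: real
  assumes "m < M"
  shows "(b - a) / (M - m) * t + (M * a - m * b) / (M - m) = a + (t - m) / (M - m) * (b - a)"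
proof -
  have ne: "M - m \<noteq> 0" using assms by simp
  have "(b - a) / (M - m) * t + (M * a - m * b) / (M - m) = ((b - a) * t + (M * a - m * b)) / (M - m)"
    by (simp add: add_divide_distrib)
  also have "(b - a) * t + (M * a - m * b) = (M - m) * a + (t - m) * (b - a)" by (simp add: algebra_simps)
  also have "((M - m) * a + (t - m) * (b - a)) / (M - m) = a + (t - m) / (M - m) * (b - a)"
    using ne by (simp add: add_divide_distrib)
  finally show ?thesis .
qed

lemma chord_refine:
  fixes f :: "real \<Rightarrow> real"
  assumes mM: "m < M" and cv: "convex_on {m..M} f" and t: "t \<in> {m..M}"
  shows "f t + 2 * min (t - m) (M - t) / (M - m) * ((f m + f M) / 2 - f ((m + M) / 2))
         \<le> (f M - f m) / (M - m) * t + (M * f m - m * f M) / (M - m)"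
proof -
  define c where "c = (m + M) / 2"
  have cI: "c \<in> {m..M}" using mM by (simp add: c_def)
  have mI: "m \<in> {m..M}" "M \<in> {m..M}" using mM by auto
  have d: "M - m > 0" using mM by simp
  show ?thesis
  proof (cases "t \<le> c")
    case True
    define l where "l = 2 * (t - m) / (M - m)"
    have l: "0 \<le> l" "l \<le> 1" using True t d by (auto simp: l_def c_def field_simps)
    have lc: "l * (c - m) = t - m" using d by (simp add: l_def c_def field_simps)
    have tt: "t = (1 - l) *\<^sub>R m + l *\<^sub>R c" using lc by (simp add: algebra_simps)
    have conv: "f t \<le> (1 - l) * f m + l * f c"
      using convex_onD[OF cv l mI(1) cI] tt by simp
    have mn: "min (t - m) (M - t) = t - m" using True by (simp add: c_def)
    have e1: "(f M - f m) / (M - m) * t + (M * f m - m * f M) / (M - m) = f m + l / 2 * (f M - f m)"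
    proof -
      have "(t - m) / (M - m) = l / 2" using d by (simp add: l_def field_simps)
      thus ?thesis unfolding chord_eq[OF mM] by (simp only:)
    qed
    have e: "(f M - f m) / (M - m) * t + (M * f m - m * f M) / (M - m) - 2 * (t - m) / (M - m) * ((f m + f M) / 2 - f c)
        = (1 - l) * f m + l * f c"
      unfolding e1 l_def[symmetric] by (simp add: field_simps)
    show ?thesis unfolding mn c_def[symmetric] using conv e by linarith
  next
    case False
    define l where "l = 2 * (M - t) / (M - m)"
    have l: "0 \<le> l" "l \<le> 1" using False t d by (auto simp: l_def c_def field_simps)
    have lc: "l * (c - M) = t - M" using d by (simp add: l_def c_def field_simps)
    have tt: "t = (1 - l) *\<^sub>R M + l *\<^sub>R c" using lc by (simp add: algebra_simps)
    have conv: "f t \<le> (1 - l) * f M + l * f c"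
      using convex_onD[OF cv l mI(2) cI] tt by simp
    have mn: "min (t - m) (M - t) = M - t" using False by (simp add: c_def)
    have lt: "(t - m) / (M - m) = 1 - l / 2" using d by (simp add: l_def field_simps)
    have e1: "(f M - f m) / (M - m) * t + (M * f m - m * f M) / (M - m) = f M - l / 2 * (f M - f m)"
      unfolding chord_eq[OF mM] lt by (simp add: algebra_simps)
    have e: "(f M - f m) / (M - m) * t + (M * f m - m * f M) / (M - m) - 2 * (M - t) / (M - m) * ((f m + f M) / 2 - f c)
        = (1 - l) * f M + l * f c"
      unfolding e1 l_def[symmetric] by (simp add: field_simps)
    show ?thesis unfolding mn c_def[symmetric] using conv e by linarith
  qed
qed

lemma tangent_bound:
  fixes f :: "real \<Rightarrow> real"
  assumes mM: "m < M" and cv: "convex_on {m..M} f"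
    and mono: "mono_on {m..M} f \<or> antimono_on {m..M} f"
    and t0: "t0 \<in> {m<..<M}" and df: "f differentiable (at t0)" and d0: "deriv f t0 \<noteq> 0"
    and t: "t \<in> {m..M}"
  shows "(f M - f m) / (M - m) * t + (M * f m - m * f M) / (M - m)
     \<le> ((f M - f m) / (M - m)) / deriv f t0 * f t +
        (((f M - f m) / (M - m)) * t0 + (M * f m - m * f M) / (M - m) - ((f M - f m) / (M - m)) * f t0 / deriv f t0)"
proof -
  define d where "d = deriv f t0"
  define A where "A = (f M - f m) / (M - m)"
  have D: "(f has_field_derivative d) (at t0 within {m..M})"
    using df by (simp add: d_def DERIV_deriv_iff_real_differentiable[symmetric] has_field_derivative_at_within)
  have tan: "f x - f t0 \<ge> d * (x - t0)" if "x \<in> {m..M}" for x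
    by (rule convex_on_imp_above_tangent[OF cv connected_Icc _ that D]) (use t0 in simp)
  have t0I: "t0 \<in> {m..M}" using t0 by auto
  have mI: "m \<in> {m..M}" "M \<in> {m..M}" using mM by auto
  have al: "A / d \<ge> 0"
    using mono
  proof
    assume mo: "mono_on {m..M} f"
    have "f m \<le> f M" using mono_onD[OF mo mI mM[THEN less_imp_le]] .
    hence A0: "A \<ge> 0" using mM by (simp add: A_def)
    have "d > 0"
    proof (rule ccontr)
      assume "\<not> d > 0"
      hence "d < 0" using d0 by (simp add: d_def)
      hence "d * (m - t0) > 0" using t0 by (simp add: mult_neg_neg)
      hence "f m > f t0" using tan[OF mI(1)] by simp
      moreover have "f m \<le> f t0" using mono_onD[OF mo mI(1) t0I] t0 by simp
      ultimately show False by simp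
    qed
    thus ?thesis using A0 by simp
  next
    assume mo: "antimono_on {m..M} f"
    have "f M \<le> f m" using monotone_onD[OF mo mI mM[THEN less_imp_le]] .
    hence A0: "A \<le> 0" using mM by (simp add: A_def divide_nonpos_pos)
    have "d < 0"
    proof (rule ccontr)
      assume "\<not> d < 0"
      hence "d > 0" using d0 by (simp add: d_def)
      hence "d * (M - t0) > 0" using t0 by simp
      hence "f M > f t0" using tan[OF mI(2)] by simp
      moreover have "f M \<le> f t0" using monotone_onD[OF mo t0I mI(2)] t0 by simp
      ultimately show False by simp
    qed
    thus ?thesis using A0 by (simp add: divide_nonpos_neg)
  qed
  have "A / d * (d * (t - t0)) \<le> A / d * (f t - f t0)" by (rule mult_left_mono[OF tan[OF t] al])
  hence "A * (t - t0) \<le> A / d * (f t - f t0)" using d0 by (simp add: d_def)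
  thus ?thesis unfolding A_def[symmetric] d_def[symmetric] by (simp add: algebra_simps)
qed

lemma op_le_trans:
  assumes "op_le X Y" "op_le Y Z" shows "op_le X Z"
  unfolding op_le_def
proof
  fix x
  have a: "Im (cinner x (Y x - X x)) = 0 \<and> 0 \<le> Re (cinner x (Y x - X x))" using assms(1) by (simp add: op_le_def)
  have b: "Im (cinner x (Z x - Y x)) = 0 \<and> 0 \<le> Re (cinner x (Z x - Y x))" using assms(2) by (simp add: op_le_def)
  have "cinner x (Z x - X x) = cinner x (Z x - Y x) + cinner x (Y x - X x)"
    by (simp add: cinner_diff_right)
  thus "Im (cinner x (Z x - X x)) = 0 \<and> 0 \<le> Re (cinner x (Z x - X x))" using a b by simp
qed

context
  fixes \<phi> :: "('a::complex_inner \<Rightarrow> 'a) \<Rightarrow> ('b::complex_inner \<Rightarrow> 'b)"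
  assumes pu: "positive_unital_linear_map \<phi>"
begin

lemma phi_bounded: "bounded_op X \<Longrightarrow> bounded_op (\<phi> X)"
  using pu by (simp add: positive_unital_linear_map_def)

lemma phi_add: "bounded_op X \<Longrightarrow> bounded_op Y \<Longrightarrow> \<phi> (\<lambda>x. X x + Y x) = (\<lambda>y. \<phi> X y + \<phi> Y y)"
  using pu by (simp add: positive_unital_linear_map_def)

lemma phi_scaleR: "bounded_op X \<Longrightarrow> \<phi> (\<lambda>x. r *\<^sub>R X x) = (\<lambda>y. r *\<^sub>R \<phi> X y)"
  using pu by (simp add: positive_unital_linear_map_def scaleR_cscale)

lemma phi_id: "\<phi> (\<lambda>x. x) = (\<lambda>y. y)"
  using pu by (simp add: positive_unital_linear_map_def)

lemma phi_affine:
  assumes X: "bounded_op X"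
  shows "\<phi> (\<lambda>x. a *\<^sub>R X x + b *\<^sub>R x) = (\<lambda>y. a *\<^sub>R \<phi> X y + b *\<^sub>R y)"
proof -
  have "\<phi> (\<lambda>x. a *\<^sub>R X x + b *\<^sub>R x) = (\<lambda>y. \<phi> (\<lambda>x. a *\<^sub>R X x) y + \<phi> (\<lambda>x. b *\<^sub>R x) y)"
    by (rule phi_add[OF bounded_op_scaleR[OF X] bounded_op_scaleR[OF bounded_op_id]])
  also have "\<dots> = (\<lambda>y. a *\<^sub>R \<phi> X y + b *\<^sub>R y)"
    using phi_scaleR[OF X, of a] phi_scaleR[OF bounded_op_id, of b] phi_id by simp
  finally show ?thesis .
qed

lemma phi_scal: "\<phi> (scal_op c) = scal_op c"
  unfolding scal_op_def using phi_scaleR[OF bounded_op_id, of c] phi_id by simp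

lemma phi_mono:
  assumes X: "bounded_op X" and Y: "bounded_op Y" and le: "op_le X Y"
  shows "op_le (\<phi> X) (\<phi> Y)"
proof -
  have eZ: "(\<lambda>x. Y x - X x) = (\<lambda>x. Y x + (-1) *\<^sub>R X x)" by simp
  have Zb: "bounded_op (\<lambda>x. Y x - X x)" by (rule bounded_op_diff[OF Y X])
  have "op_le (\<lambda>x. 0) (\<lambda>x. Y x - X x)" using le by (simp add: op_le_def)
  hence p: "op_le (\<lambda>y. 0) (\<phi> (\<lambda>x. Y x - X x))" using pu Zb by (simp add: positive_unital_linear_map_def)
  have "\<phi> (\<lambda>x. Y x - X x) = (\<lambda>y. \<phi> Y y + \<phi> (\<lambda>x. (-1) *\<^sub>R X x) y)"
    unfolding eZ by (rule phi_add[OF Y bounded_op_scaleR[OF X]])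
  also have "\<dots> = (\<lambda>y. \<phi> Y y + (-1) *\<^sub>R \<phi> X y)" unfolding phi_scaleR[OF X] ..
  also have "\<dots> = (\<lambda>y. \<phi> Y y - \<phi> X y)" by simp
  finally show ?thesis using p by (simp add: op_le_def)
qed

end

lemma cfc_affine_f:
  fixes T :: "'a::chilbert_space \<Rightarrow> 'a"
  assumes gd: "good T m M" and g: "continuous_on {m..M} g"
  shows "cfc T (\<lambda>t. a * g t + b) = (\<lambda>x. a *\<^sub>R cfc T g x + b *\<^sub>R x)"
proof (rule ext)
  fix x
  have c1: "continuous_on {m..M} (\<lambda>t. a * g t)" using g by (intro continuous_intros)
  have c2: "continuous_on {m..M} (\<lambda>t. 0 * t + b)" by (intro continuous_intros)
  have "(\<lambda>t. a * g t + b) = (\<lambda>t. a * g t + (0 * t + b))" by simp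
  hence "cfc T (\<lambda>t. a * g t + b) x = cfc T (\<lambda>t. a * g t) x + cfc T (\<lambda>t. 0 * t + b) x"
    using cfc_add[OF gd c1 c2, of x] by simp
  also have "\<dots> = a *\<^sub>R cfc T g x + b *\<^sub>R x"
    using cfc_smult[OF gd g, of a x] cfc_affine[OF gd, of 0 b x] by simp
  finally show "cfc T (\<lambda>t. a * g t + b) x = a *\<^sub>R cfc T g x + b *\<^sub>R x" .
qed

lemma cfc_add_fun:
  fixes T :: "'a::chilbert_space \<Rightarrow> 'a"
  assumes gd: "good T m M" and g: "continuous_on {m..M} g" and h: "continuous_on {m..M} h"
  shows "(\<lambda>x. cfc T g x + cfc T h x) = cfc T (\<lambda>t. g t + h t)"
  by (rule ext) (simp add: cfc_add[OF gd g h])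

lemma cfc_affine_fun:
  fixes T :: "'a::chilbert_space \<Rightarrow> 'a"
  assumes gd: "good T m M"
  shows "cfc T (\<lambda>t. a * t + b) = (\<lambda>x. a *\<^sub>R T x + b *\<^sub>R x)"
  by (rule ext) (simp add: cfc_affine[OF gd])

theorem proposition3p1:
  fixes f :: "real \<Rightarrow> real" and m M t0 :: real
    and A :: "'a::chilbert_space \<Rightarrow> 'a"
    and \<phi> :: "('a \<Rightarrow> 'a) \<Rightarrow> ('b::chilbert_space \<Rightarrow> 'b)"
  assumes "0 < m" and "m < M"
    and "\<forall>t\<in>{m..M}. 0 < f t"
    and "continuous_on {m..M} f"
    and "convex_on {m..M} f"
    and "mono_on {m..M} f \<or> antimono_on {m..M} f"
    and "bounded_op A" and "op_le (scal_op m) A" and "op_le A (scal_op M)"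
    and "positive_unital_linear_map \<phi>"
    and "t0 \<in> {m<..<M}" and "f differentiable (at t0)" and "deriv f t0 \<noteq> 0"
  shows "op_le (\<lambda>y. \<phi> (cfc A f) y + \<phi> (op_min f m M A) y)
               (\<lambda>y. alpha_f f m M t0 *\<^sub>R cfc (\<phi> A) f y + beta_f f m M t0 *\<^sub>R y) \<and>
         op_le (\<lambda>y. cfc (\<phi> A) f y + op_min f m M (\<phi> A) y)
               (\<lambda>y. alpha_f f m M t0 *\<^sub>R \<phi> (cfc A f) y + beta_f f m M t0 *\<^sub>R y)"
proof -
  note mM = assms(2) and cf = assms(4) and cv = assms(5) and mono = assms(6)
  note Ab = assms(7) and le1 = assms(8) and le2 = assms(9) and pu = assms(10)
  note t0 = assms(11) and df = assms(12) and d0 = assms(13)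
  define mn where "mn = (\<lambda>t. 2 * min (t - m) (M - t) / (M - m) * ((f m + f M) / 2 - f ((m + M) / 2)))"
  define af where "af = a_f f m M"
  define bf where "bf = b_f f m M"
  define al where "al = alpha_f f m M t0"
  define be where "be = beta_f f m M t0"
  have cmn: "continuous_on {m..M} mn" unfolding mn_def using mM by (intro continuous_intros) auto
  have cfm: "continuous_on {m..M} (\<lambda>t. f t + mn t)" using cf cmn by (intro continuous_intros)
  have caff: "continuous_on {m..M} (\<lambda>t. af * t + bf)" by (intro continuous_intros)
  have chf: "continuous_on {m..M} (\<lambda>t. al * f t + be)" using cf by (intro continuous_intros)
  have S1: "f t + mn t \<le> af * t + bf" if "t \<in> {m..M}" for t
    unfolding mn_def af_def bf_def a_f_def b_f_def by (rule chord_refine[OF mM cv that])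
  have S2: "af * t + bf \<le> al * f t + be" if "t \<in> {m..M}" for t
    unfolding af_def bf_def al_def be_def a_f_def b_f_def alpha_f_def beta_f_def
    by (rule tangent_bound[OF mM cv mono t0 df d0 that])
  have gA: "good A m M" by (rule good_of[OF Ab le1 le2])
  have A'b: "bounded_op (\<phi> A)" by (rule phi_bounded[OF pu Ab])
  have le1': "op_le (scal_op m) (\<phi> A)"
    using phi_mono[OF pu bounded_op_scal Ab le1] phi_scal[OF pu] by simp
  have le2': "op_le (\<phi> A) (scal_op M)"
    using phi_mono[OF pu Ab bounded_op_scal le2] phi_scal[OF pu] by simp
  have gA': "good (\<phi> A) m M" by (rule good_of[OF A'b le1' le2'])
  have omA: "op_min f m M A = cfc A mn" by (simp add: op_min_def mn_def)
  have omA': "op_min f m M (\<phi> A) = cfc (\<phi> A) mn" by (simp add: op_min_def mn_def)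
  have bA: "bounded_op (cfc A g)" if "continuous_on {m..M} g" for g by (rule cfc_bounded[OF gA that])
  have "(\<lambda>y. \<phi> (cfc A f) y + \<phi> (cfc A mn) y) = \<phi> (\<lambda>x. cfc A f x + cfc A mn x)"
    by (rule phi_add[OF pu bA[OF cf] bA[OF cmn], symmetric])
  also have "\<dots> = \<phi> (cfc A (\<lambda>t. f t + mn t))" by (simp add: cfc_add_fun[OF gA cf cmn])
  finally have l1: "(\<lambda>y. \<phi> (cfc A f) y + \<phi> (cfc A mn) y) = \<phi> (cfc A (\<lambda>t. f t + mn t))" .
  have i1: "op_le (\<phi> (cfc A (\<lambda>t. f t + mn t))) (\<phi> (cfc A (\<lambda>t. af * t + bf)))"
    by (rule phi_mono[OF pu bA[OF cfm] bA[OF caff] cfc_le[OF gA cfm caff S1]])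
  have e1: "\<phi> (cfc A (\<lambda>t. af * t + bf)) = cfc (\<phi> A) (\<lambda>t. af * t + bf)"
    unfolding cfc_affine_fun[OF gA] cfc_affine_fun[OF gA'] by (rule phi_affine[OF pu Ab])
  have i2: "op_le (cfc (\<phi> A) (\<lambda>t. af * t + bf)) (cfc (\<phi> A) (\<lambda>t. al * f t + be))"
    by (rule cfc_le[OF gA' caff chf S2])
  have e2: "cfc (\<phi> A) (\<lambda>t. al * f t + be) = (\<lambda>y. al *\<^sub>R cfc (\<phi> A) f y + be *\<^sub>R y)"
    by (rule cfc_affine_f[OF gA' cf])
  have P1: "op_le (\<lambda>y. \<phi> (cfc A f) y + \<phi> (cfc A mn) y) (\<lambda>y. al *\<^sub>R cfc (\<phi> A) f y + be *\<^sub>R y)"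
    using op_le_trans[OF i1[unfolded e1] i2] unfolding l1 e2 .
  have i3: "op_le (cfc (\<phi> A) (\<lambda>t. f t + mn t)) (cfc (\<phi> A) (\<lambda>t. af * t + bf))"
    by (rule cfc_le[OF gA' cfm caff S1])
  have i4: "op_le (\<phi> (cfc A (\<lambda>t. af * t + bf))) (\<phi> (cfc A (\<lambda>t. al * f t + be)))"
    by (rule phi_mono[OF pu bA[OF caff] bA[OF chf] cfc_le[OF gA caff chf S2]])
  have e3: "\<phi> (cfc A (\<lambda>t. al * f t + be)) = (\<lambda>y. al *\<^sub>R \<phi> (cfc A f) y + be *\<^sub>R y)"
    unfolding cfc_affine_f[OF gA cf] by (rule phi_affine[OF pu bA[OF cf]])
  have P2: "op_le (\<lambda>y. cfc (\<phi> A) f y + cfc (\<phi> A) mn y) (\<lambda>y. al *\<^sub>R \<phi> (cfc A f) y + be *\<^sub>R y)"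
    using op_le_trans[OF i3 i4[unfolded e1 e3]] unfolding cfc_add_fun[OF gA' cf cmn] .
  show ?thesis using P1 P2 unfolding omA omA' al_def be_def by simp
qed

end
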